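(* Define: - $K_n=\overline{\Sigma}_c^{-1}H_n^TR_n^{-1}$; - $\mathcal{K}=\mathrm{diag}(K_1,\dots,K_N)$ (block diagonal); - $\mathcal{H}=\mathrm{diag}(H_1,\dots,H_N)$ (block diagonal). Then for every $0<\varepsilon<1$ there exist a deterministic time $t_\varepsilon$ and a constant $c_\varepsilon$ such that $$\mathbf{z}^T\big(\beta_t\overline{L}\otimes I_M+\alpha_t\widetilde{\mathcal{K}}\mathcal{H}\big)\mathbf{z}\ge c_\varepsilon\beta_t\|\mathbf{z}_{\mathcal{C}^\perp}\|^2$$ for all $t\ge t_\varepsilon$, all $\mathbf{z}\in\mathbb{R}^{NM}$, and all matrices $\widetilde{\mathcal{K}}\in\mathbb{R}^{NM\times\sum_nM_n}$ with $\|\widetilde{\mathcal{K}}\mathcal{H}-\mathcal{K}\mathcal{H}\|\le\varepsilon$.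
   Context: The data are as follows. - $H_n\in\mathbb{R}^{M_n\times M}$ for $n=1,\dots,N$. - $R_n$ are symmetric positive definite $M_n\times M_n$ matrices. - $\overline{\Sigma}_c=\frac1N\sum_{n=1}^NH_n^TR_n^{-1}H_n$ is assumed invertible. - $\overline{L}$ is the expectation of a random $N\times N$ graph Laplacian of simple undirected graphs on $\{1,\dots,N\}$, with $\lambda_2(\overline{L})>0$, where $\lambda_2$ is the second smallest eigenvalue. - The weights are $\alpha_t=a/(t+1)^{\tau_1}$ and $\beta_t=b/(t+1)^{\tau_2}$ with $a,b>0$, $0<\tau_2\le\tau_1\le1$, and $\tau_1>\tau_2+\frac1{2+\varepsilon_1}+\frac12$ for some $\varepsilon_1>0$. The consensus subspace is $\mathcal{C}=\{\mathbf{1}_N\otimes\mathbf{a}:\mathbf{a}\in\mathbb{R}^M\}$, and $\mathbf{z}_{\mathcal{C}^\perp}$ is the orthogonal projection of $\mathbf{z}$ onto the orthogonal complement $\mathcal{C}^\perp$. $\otimes$ is the Kronecker product and $\|\cdot\|$ the Euclidean norm or induced matrix 2-norm. *)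

theory Defs
  imports "Jordan_Normal_Form.Char_Poly" "HOL-Probability.Probability"
begin

definition vnorm :: "real Matrix.vec \<Rightarrow> real" where
  "vnorm v = sqrt (scalar_prod v v)"

definition mnorm2 :: "real mat \<Rightarrow> real" where
  "mnorm2 A = Sup {vnorm (A *\<^sub>v v) | v. v \<in> carrier_vec (dim_col A) \<and> vnorm v \<le> 1}"

definition minv :: "real mat \<Rightarrow> real mat" where
  "minv A = (SOME B. B \<in> carrier_mat (dim_row A) (dim_row A) \<and> A * B = 1\<^sub>m (dim_row A)
                      \<and> B * A = 1\<^sub>m (dim_row A))"

definition sym_pos_def :: "nat \<Rightarrow> real mat \<Rightarrow> bool" where
  "sym_pos_def k A \<longleftrightarrow> A \<in> carrier_mat k k \<and> A\<^sup>T = A \<and>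
     (\<forall>v \<in> carrier_vec k. v \<noteq> 0\<^sub>v k \<longrightarrow> scalar_prod v (A *\<^sub>v v) > 0)"

definition kron :: "real mat \<Rightarrow> real mat \<Rightarrow> real mat" where
  "kron A B = Matrix.mat (dim_row A * dim_row B) (dim_col A * dim_col B)
     (\<lambda>(i,j). A $$ (i div dim_row B, j div dim_col B) * B $$ (i mod dim_row B, j mod dim_col B))"

definition kron_ones :: "nat \<Rightarrow> real Matrix.vec \<Rightarrow> real Matrix.vec" where
  "kron_ones N a = Matrix.vec (N * dim_vec a) (\<lambda>i. vec_index a (i mod dim_vec a))"

definition consensus :: "nat \<Rightarrow> nat \<Rightarrow> real Matrix.vec set" where
  "consensus N M = {kron_ones N a | a. a \<in> carrier_vec M}"

definition consensus_perp :: "nat \<Rightarrow> nat \<Rightarrow> real Matrix.vec set" where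
  "consensus_perp N M = {v \<in> carrier_vec (N * M). \<forall>c \<in> consensus N M. scalar_prod v c = 0}"

definition proj_perp :: "nat \<Rightarrow> nat \<Rightarrow> real Matrix.vec \<Rightarrow> real Matrix.vec" where
  "proj_perp N M z = (THE p. p \<in> consensus_perp N M \<and> z - p \<in> consensus N M)"

definition simple_graph :: "nat \<Rightarrow> nat set set \<Rightarrow> bool" where
  "simple_graph N E \<longleftrightarrow> E \<subseteq> {{i, j} | i j. i < N \<and> j < N \<and> i \<noteq> j}"

definition laplacian :: "nat \<Rightarrow> nat set set \<Rightarrow> real mat" where
  "laplacian N E = Matrix.mat N N (\<lambda>(i,j).
     if i = j then real (card {k. k < N \<and> {i, k} \<in> E})
     else if {i, j} \<in> E then -1 else 0)"

definition expected_laplacian :: "nat \<Rightarrow> nat set set pmf \<Rightarrow> real mat" where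
  "expected_laplacian N G = Matrix.mat N N (\<lambda>(i,j).
     measure_pmf.expectation G (\<lambda>E. laplacian N E $$ (i,j)))"

(* second smallest eigenvalue (eigenvalues with multiplicity, ascending) *)
definition lambda2 :: "real mat \<Rightarrow> real" where
  "lambda2 A = sorted_list_of_multiset (proots (char_poly A)) ! 1"

end

theory Submission
  imports Defs
begin

no_notation inner (infix \<open>\<bullet>\<close> 70)
no_notation vec_nth (infixl \<open>$\<close> 90)

lemma quad_disc:
  fixes a b c :: real
  assumes h: "\<And>t. 0 \<le> a + 2*t*b + t^2*c" and c0: "c \<ge> 0"
  shows "b^2 \<le> a*c"
proof (cases "c = 0")
  case True
  have "b = 0"
  proof (rule ccontr)
    assume b: "b \<noteq> 0"
    have "0 \<le> a + 2*(-(\<bar>a\<bar>+1)/(2*b))*b + (-(\<bar>a\<bar>+1)/(2*b))^2*c" using h by blast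
    also have "\<dots> = a - (\<bar>a\<bar>+1)" using b True by (simp add: field_simps)
    finally show False by linarith
  qed
  then show ?thesis using True by simp
next
  case False
  then have cp: "c > 0" using c0 by simp
  have "0 \<le> a + 2*(-b/c)*b + (-b/c)^2*c" using h by blast
  also have "\<dots> = a - b^2/c" using cp by (simp add: field_simps power2_eq_square)
  finally have "b^2/c \<le> a" by simp
  then show ?thesis using cp by (simp add: field_simps)
qed

lemma psd_cs:
  fixes A :: "real mat"
  assumes A: "A \<in> carrier_mat n n" and sym: "transpose_mat A = A"
    and psd: "\<And>v. v \<in> carrier_vec n \<Longrightarrow> 0 \<le> v \<bullet> (A *\<^sub>v v)"
    and x: "x \<in> carrier_vec n" and y: "y \<in> carrier_vec n"
  shows "(x \<bullet> (A *\<^sub>v y))^2 \<le> (x \<bullet> (A *\<^sub>v x)) * (y \<bullet> (A *\<^sub>v y))"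
proof (rule quad_disc)
  have symm: "y \<bullet> (A *\<^sub>v x) = x \<bullet> (A *\<^sub>v y)"
  proof -
    have "y \<bullet> (A *\<^sub>v x) = (transpose_mat A *\<^sub>v y) \<bullet> x"
      using transpose_vec_mult_scalar[OF A x y] by simp
    also have "\<dots> = (A *\<^sub>v y) \<bullet> x" using sym by simp
    also have "\<dots> = x \<bullet> (A *\<^sub>v y)" using comm_scalar_prod[of "A *\<^sub>v y" n x] A x y by simp
    finally show ?thesis .
  qed
  fix t :: real
  have v: "x + t \<cdot>\<^sub>v y \<in> carrier_vec n" using x y by simp
  have "(x + t \<cdot>\<^sub>v y) \<bullet> (A *\<^sub>v (x + t \<cdot>\<^sub>v y))
      = x \<bullet> (A *\<^sub>v x) + 2*t*(x \<bullet> (A *\<^sub>v y)) + t^2*(y \<bullet> (A *\<^sub>v y))"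
  proof -
    have e1: "A *\<^sub>v (x + t \<cdot>\<^sub>v y) = A *\<^sub>v x + t \<cdot>\<^sub>v (A *\<^sub>v y)"
      using A x y by (simp add: mult_add_distrib_mat_vec mult_mat_vec)
    have Ax: "A *\<^sub>v x \<in> carrier_vec n" and Ay: "A *\<^sub>v y \<in> carrier_vec n" using A x y by auto
    have "(x + t \<cdot>\<^sub>v y) \<bullet> (A *\<^sub>v x + t \<cdot>\<^sub>v (A *\<^sub>v y))
       = x \<bullet> (A *\<^sub>v x + t \<cdot>\<^sub>v (A *\<^sub>v y)) + (t \<cdot>\<^sub>v y) \<bullet> (A *\<^sub>v x + t \<cdot>\<^sub>v (A *\<^sub>v y))"
      using add_scalar_prod_distrib[of x n "t \<cdot>\<^sub>v y"] x y Ax Ay by simp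
    also have "\<dots> = x \<bullet> (A *\<^sub>v x) + t * (x \<bullet> (A *\<^sub>v y)) + (t * (y \<bullet> (A *\<^sub>v x)) + t*t*(y \<bullet> (A *\<^sub>v y)))"
      using scalar_prod_add_distrib[of x n] scalar_prod_add_distrib[of "t \<cdot>\<^sub>v y" n] x y Ax Ay by simp
    finally show ?thesis using e1 symm by (simp add: power2_eq_square algebra_simps)
  qed
  then show "0 \<le> x \<bullet> (A *\<^sub>v x) + 2*t*(x \<bullet> (A *\<^sub>v y)) + t^2*(y \<bullet> (A *\<^sub>v y))"
    using psd[OF v] by simp
next
  show "0 \<le> y \<bullet> (A *\<^sub>v y)" using psd[OF y] .
qed



lemma sp_self: "(x :: real Matrix.vec) \<bullet> x = (\<Sum>i<dim_vec x. (x $ i)^2)"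
  unfolding scalar_prod_def by (simp add: power2_eq_square atLeast0LessThan)

lemma sp_self_nonneg: "0 \<le> scalar_prod x (x :: real Matrix.vec)"
  unfolding scalar_prod_def by (intro sum_nonneg) auto

lemma vnorm_sq: "(vnorm x)^2 = x \<bullet> x"
  unfolding vnorm_def using sp_self_nonneg by simp

lemma vnorm_nonneg: "0 \<le> vnorm x"
  unfolding vnorm_def using sp_self_nonneg[of x] by simp

lemma sp_self_zero: assumes "x \<in> carrier_vec n" "x \<bullet> x = (0::real)" shows "x = 0\<^sub>v n"
proof -
  have "\<forall>i\<in>{..<dim_vec x}. (x $ i)^2 = 0"
    using assms(2) unfolding sp_self by (subst sum_nonneg_eq_0_iff[symmetric]) auto
  then show ?thesis using assms(1) by (intro eq_vecI) auto
qed

lemma cs_vec: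
  assumes x: "x \<in> carrier_vec n" and y: "y \<in> carrier_vec n"
  shows "\<bar>x \<bullet> y\<bar> \<le> vnorm x * vnorm (y :: real Matrix.vec)"
proof -
  have "(x \<bullet> (1\<^sub>m n *\<^sub>v y))^2 \<le> (x \<bullet> (1\<^sub>m n *\<^sub>v x)) * (y \<bullet> (1\<^sub>m n *\<^sub>v y))"
    by (rule psd_cs[OF one_carrier_mat _ _ x y]) (auto simp: sp_self_nonneg)
  then have "(x \<bullet> y)^2 \<le> (x \<bullet> x) * (y \<bullet> y)" using x y by simp
  then have "sqrt ((x \<bullet> y)^2) \<le> sqrt ((x \<bullet> x) * (y \<bullet> y))" by (rule real_sqrt_le_mono)
  then show ?thesis unfolding vnorm_def by (simp add: real_sqrt_mult)
qed

lemma comp_le_vnorm: assumes "i < dim_vec x" shows "\<bar>x $ i\<bar> \<le> vnorm x"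
proof -
  have "(x $ i)^2 \<le> (\<Sum>i<dim_vec x. (x $ i)^2)"
    using assms by (intro member_le_sum) auto
  then have "sqrt ((x $ i)^2) \<le> sqrt (x \<bullet> x)" unfolding sp_self by (rule real_sqrt_le_mono)
  then show ?thesis unfolding vnorm_def by simp
qed

definition absum :: "real mat \<Rightarrow> real" where
  "absum A = (\<Sum>i<dim_row A. \<Sum>j<dim_col A. \<bar>A $$ (i,j)\<bar>)"

lemma absum_nonneg: "0 \<le> absum A" unfolding absum_def by (simp add: sum_nonneg)

lemma sp_mult_expand:
  assumes A: "A \<in> carrier_mat nr nc" and x: "x \<in> carrier_vec nr" and y: "y \<in> carrier_vec nc"
  shows "x \<bullet> (A *\<^sub>v y) = (\<Sum>i<nr. \<Sum>j<nc. x $ i * A $$ (i,j) * y $ j)"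
  using A x y unfolding scalar_prod_def mult_mat_vec_def
  by (simp add: atLeast0LessThan sum_distrib_left mult.assoc row_def)

lemma bil_bound:
  assumes A: "A \<in> carrier_mat nr nc" and x: "x \<in> carrier_vec nr" and y: "y \<in> carrier_vec nc"
  shows "\<bar>x \<bullet> (A *\<^sub>v y)\<bar> \<le> absum A * vnorm x * vnorm y"
proof -
  have "\<bar>x \<bullet> (A *\<^sub>v y)\<bar> \<le> (\<Sum>i<nr. \<Sum>j<nc. \<bar>x $ i * A $$ (i,j) * y $ j\<bar>)"
    unfolding sp_mult_expand[OF A x y]
    by (rule order.trans[OF sum_abs], rule sum_mono, rule sum_abs)
  also have "\<dots> \<le> (\<Sum>i<nr. \<Sum>j<nc. \<bar>A $$ (i,j)\<bar> * (vnorm x * vnorm y))"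
  proof (intro sum_mono)
    fix i j assume i: "i \<in> {..<nr}" and j: "j \<in> {..<nc}"
    have "\<bar>x $ i\<bar> \<le> vnorm x" using i x comp_le_vnorm by auto
    moreover have "\<bar>y $ j\<bar> \<le> vnorm y" using j y comp_le_vnorm by auto
    ultimately have "\<bar>x $ i\<bar> * \<bar>y $ j\<bar> \<le> vnorm x * vnorm y"
      by (intro mult_mono) (auto simp: vnorm_nonneg)
    then have "\<bar>A $$ (i,j)\<bar> * (\<bar>x $ i\<bar> * \<bar>y $ j\<bar>) \<le> \<bar>A $$ (i,j)\<bar> * (vnorm x * vnorm y)"
      by (intro mult_left_mono) auto
    moreover have "\<bar>x $ i * A $$ (i,j) * y $ j\<bar> = \<bar>A $$ (i,j)\<bar> * (\<bar>x $ i\<bar> * \<bar>y $ j\<bar>)"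
      by (simp add: abs_mult mult_ac)
    ultimately show "\<bar>x $ i * A $$ (i,j) * y $ j\<bar> \<le> \<bar>A $$ (i,j)\<bar> * (vnorm x * vnorm y)" by simp
  qed
  also have "\<dots> = absum A * vnorm x * vnorm y"
    unfolding absum_def using A by (simp add: sum_distrib_right mult.assoc)
  finally show ?thesis .
qed

lemma vnorm_mult_bound:
  assumes A: "A \<in> carrier_mat nr nc" and v: "v \<in> carrier_vec nc"
  shows "vnorm (A *\<^sub>v v) \<le> absum A * vnorm v"
proof (cases "vnorm (A *\<^sub>v v) = 0")
  case True then show ?thesis by (simp add: absum_nonneg vnorm_nonneg)
next
  case False
  have w: "A *\<^sub>v v \<in> carrier_vec nr" using A v by simp
  have "(vnorm (A *\<^sub>v v))^2 = (A *\<^sub>v v) \<bullet> (A *\<^sub>v v)" by (rule vnorm_sq)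
  also have "\<dots> \<le> absum A * vnorm (A *\<^sub>v v) * vnorm v"
    using bil_bound[OF A w v] by simp
  finally have "vnorm (A *\<^sub>v v) * vnorm (A *\<^sub>v v) \<le> (absum A * vnorm v) * vnorm (A *\<^sub>v v)"
    by (simp add: power2_eq_square mult_ac)
  then show ?thesis using False vnorm_nonneg[of "A *\<^sub>v v"] by (simp add: mult_le_cancel_right)
qed

lemma vnorm_smult: "vnorm (c \<cdot>\<^sub>v v) = \<bar>c\<bar> * vnorm v"
proof -
  have "(c \<cdot>\<^sub>v v) \<bullet> (c \<cdot>\<^sub>v v) = c^2 * (v \<bullet> v)" by (simp add: power2_eq_square)
  then show ?thesis unfolding vnorm_def by (simp add: real_sqrt_mult)
qed

lemma mnorm2_bound:
  assumes A: "A \<in> carrier_mat nr nc" and z: "z \<in> carrier_vec nc"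
  shows "vnorm (A *\<^sub>v z) \<le> mnorm2 A * vnorm z"
proof -
  let ?S = "{vnorm (A *\<^sub>v v) | v. v \<in> carrier_vec (dim_col A) \<and> vnorm v \<le> 1}"
  have bdd: "bdd_above ?S"
  proof (rule bdd_aboveI)
    fix s assume "s \<in> ?S"
    then obtain v where v: "v \<in> carrier_vec nc" "vnorm v \<le> 1" and s: "s = vnorm (A *\<^sub>v v)" using A by auto
    have "s \<le> absum A * vnorm v" using s vnorm_mult_bound[OF A v(1)] by simp
    also have "\<dots> \<le> absum A" using v(2) absum_nonneg[of A] by (simp add: mult_left_le)
    finally show "s \<le> absum A" .
  qed
  show ?thesis
  proof (cases "vnorm z = 0")
    case True
    then have "z \<bullet> z = 0" using vnorm_sq[of z] by simp
    then have "z = 0\<^sub>v nc" using sp_self_zero z by blast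
    then have "A *\<^sub>v z = 0\<^sub>v nr" using A by auto
    then show ?thesis using True by (simp add: vnorm_def)
  next
    case False
    then have zp: "vnorm z > 0" using vnorm_nonneg[of z] by simp
    define v where "v = (1 / vnorm z) \<cdot>\<^sub>v z"
    have vc: "v \<in> carrier_vec nc" using z v_def by simp
    have vn: "vnorm v = 1" unfolding v_def vnorm_smult using zp by simp
    have Av: "A *\<^sub>v v = (1 / vnorm z) \<cdot>\<^sub>v (A *\<^sub>v z)" unfolding v_def using A z by (simp add: mult_mat_vec)
    have "vnorm (A *\<^sub>v v) \<in> ?S" using vc vn A by auto
    then have "vnorm (A *\<^sub>v v) \<le> mnorm2 A" unfolding mnorm2_def by (rule cSup_upper[OF _ bdd])
    then have "vnorm (A *\<^sub>v z) / vnorm z \<le> mnorm2 A" unfolding Av vnorm_smult using zp by simp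
    then show ?thesis using zp by (simp add: field_simps)
  qed
qed

lemma quad_mnorm2:
  assumes A: "A \<in> carrier_mat n n" and z: "z \<in> carrier_vec n"
  shows "z \<bullet> (A *\<^sub>v z) \<ge> - (mnorm2 A * (vnorm z)^2)"
proof -
  have "\<bar>z \<bullet> (A *\<^sub>v z)\<bar> \<le> vnorm z * vnorm (A *\<^sub>v z)" using cs_vec[OF z] A z by simp
  also have "\<dots> \<le> vnorm z * (mnorm2 A * vnorm z)"
    using mnorm2_bound[OF A z] vnorm_nonneg[of z] by (rule mult_left_mono) 
  finally show ?thesis by (simp add: power2_eq_square mult_ac)
qed

lemma minv_props_ker:
  assumes A: "A \<in> carrier_mat n n"
    and ker: "\<And>v. v \<in> carrier_vec n \<Longrightarrow> A *\<^sub>v v = 0\<^sub>v n \<Longrightarrow> v = 0\<^sub>v n"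
  shows "minv A \<in> carrier_mat n n \<and> A * minv A = 1\<^sub>m n \<and> minv A * A = 1\<^sub>m n"
proof -
  have "Determinant.det A \<noteq> 0" using det_0_iff_vec_prod_zero[OF A] ker by blast
  from det_non_zero_imp_unit[OF A this, of undefined]
  obtain B where B: "B \<in> carrier_mat n n" "A * B = 1\<^sub>m n" "B * A = 1\<^sub>m n"
    unfolding Units_def ring_mat_def by auto
  have dr: "dim_row A = n" using A by simp
  have ex: "\<exists>B. B \<in> carrier_mat (dim_row A) (dim_row A) \<and> A * B = 1\<^sub>m (dim_row A) \<and> B * A = 1\<^sub>m (dim_row A)"
    using B dr by auto
  show ?thesis unfolding minv_def dr(1) using someI_ex[OF ex[unfolded dr(1)]] by simp
qed

lemma minv_props_inv:
  assumes A: "A \<in> carrier_mat n n" and inv: "invertible_mat A"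
  shows "minv A \<in> carrier_mat n n \<and> A * minv A = 1\<^sub>m n \<and> minv A * A = 1\<^sub>m n"
proof -
  obtain B where B: "A * B = 1\<^sub>m (dim_row A)" "B * A = 1\<^sub>m (dim_row B)"
    using inv unfolding invertible_mat_def inverts_mat_def by auto
  have dr: "dim_row A = n" "dim_col A = n" using A by auto
  have "dim_col B = n" using arg_cong[OF B(1), of dim_col] dr by simp
  moreover have "dim_row B = n" using arg_cong[OF B(2), of dim_col] dr by simp
  ultimately have Bc: "B \<in> carrier_mat n n" by auto
  have ex: "\<exists>B. B \<in> carrier_mat (dim_row A) (dim_row A) \<and> A * B = 1\<^sub>m (dim_row A) \<and> B * A = 1\<^sub>m (dim_row A)"
    using B Bc dr by auto
  show ?thesis unfolding minv_def dr(1) using someI_ex[OF ex[unfolded dr(1)]] by simp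
qed



definition adj :: "nat set set \<Rightarrow> nat \<Rightarrow> nat \<Rightarrow> real" where
  "adj E i j = (if {i,j} \<in> E then 1 else 0)"

lemma adj_sym: "adj E i j = adj E j i" unfolding adj_def by (simp add: insert_commute)

lemma adj_nonneg: "0 \<le> adj E i j" unfolding adj_def by simp

lemma card_as_sum: "real (card {k. k < (N::nat) \<and> P k}) = (\<Sum>k<N. if P k then 1 else 0)"
proof -
  have e: "{k. k < N \<and> P k} = {k\<in>{..<N}. P k}" by auto
  have "real (card {k. k < N \<and> P k}) = (\<Sum>k\<in>{k\<in>{..<N}. P k}. 1)" unfolding e by simp
  also have "\<dots> = (\<Sum>k<N. if P k then 1 else 0)"
    by (rule sum.inter_filter) simp
  finally show ?thesis .
qed

lemma lap_entry_simple:
  assumes sg: "simple_graph N E" and i: "i < N" and j: "j < N"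
  shows "laplacian N E $$ (i,j) = (if i = j then (\<Sum>k<N. adj E i k) else 0) - adj E i j"
proof -
  have nii: "{i,i} \<notin> E"
  proof
    assume "{i,i} \<in> E"
    then obtain a b where "{i} = {a,b}" "a \<noteq> b" using sg unfolding simple_graph_def by auto
    then have "a \<in> {i}" "b \<in> {i}" by auto
    then show False using \<open>a \<noteq> b\<close> by simp
  qed
  show ?thesis using i j nii unfolding laplacian_def adj_def
    by (auto simp: card_as_sum)
qed

lemma lap_bound:
  assumes i: "i < N" and j: "j < N"
  shows "\<bar>laplacian N E $$ (i,j)\<bar> \<le> real N"
proof -
  have "card {k. k < N \<and> {i, k} \<in> E} \<le> card {..<N}" by (rule card_mono) auto
  then have "card {k. k < N \<and> {i, k} \<in> E} \<le> N" by simp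
  moreover have "1 \<le> N" using i by simp
  ultimately show ?thesis using i j unfolding laplacian_def by auto
qed

lemma lap_sym: "i < N \<Longrightarrow> j < N \<Longrightarrow> laplacian N E $$ (i,j) = laplacian N E $$ (j,i)"
  unfolding laplacian_def by (auto simp: insert_commute)

lemma lap_rowsum_simple:
  assumes sg: "simple_graph N E" and i: "i < N"
  shows "(\<Sum>j<N. laplacian N E $$ (i,j)) = 0"
proof -
  have "(\<Sum>j<N. laplacian N E $$ (i,j)) = (\<Sum>j<N. (if i = j then (\<Sum>k<N. adj E i k) else 0) - adj E i j)"
    by (rule sum.cong) (auto simp: lap_entry_simple[OF sg i])
  also have "\<dots> = 0" using i by (simp add: sum_subtractf)
  finally show ?thesis .
qed

lemma lap_quad_simple:
  assumes sg: "simple_graph N E" and v: "v \<in> carrier_vec N"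
  shows "0 \<le> v \<bullet> (laplacian N E *\<^sub>v v)"
proof -
  let ?L = "laplacian N E"
  let ?a = "adj E"
  have L: "?L \<in> carrier_mat N N" unfolding laplacian_def by simp
  have row: "(\<Sum>j<N. v $ i * ?L $$ (i,j) * v $ j) = (\<Sum>j<N. ?a i j * ((v $ i)^2 - v $ i * v $ j))" if i: "i < N" for i
  proof -
    have "(\<Sum>j<N. v $ i * ?L $$ (i,j) * v $ j) = (\<Sum>j<N. (if i = j then v $ i * (\<Sum>k<N. ?a i k) * v $ j else 0) - v $ i * ?a i j * v $ j)"
      by (intro sum.cong) (auto simp: lap_entry_simple[OF sg i] algebra_simps)
    also have "\<dots> = v $ i * (\<Sum>k<N. ?a i k) * v $ i - (\<Sum>j<N. v $ i * ?a i j * v $ j)"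
      using i by (simp add: sum_subtractf)
    also have "\<dots> = (\<Sum>j<N. ?a i j * ((v $ i)^2 - v $ i * v $ j))"
      by (simp add: sum_distrib_left sum_distrib_right sum_subtractf[symmetric] algebra_simps power2_eq_square)
    finally show ?thesis .
  qed
  define S where "S = (\<Sum>i<N. \<Sum>j<N. ?a i j * ((v $ i)^2 - v $ i * v $ j))"
  have q: "v \<bullet> (?L *\<^sub>v v) = S"
    unfolding sp_mult_expand[OF L v v] S_def by (rule sum.cong[OF refl]) (simp add: row)
  have S2: "S = (\<Sum>i<N. \<Sum>j<N. ?a i j * ((v $ j)^2 - v $ j * v $ i))"
    unfolding S_def by (subst sum.swap) (simp add: adj_sym)
  have "2 * S = (\<Sum>i<N. \<Sum>j<N. ?a i j * (v $ i - v $ j)^2)"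
  proof -
    have "2 * S = S + (\<Sum>i<N. \<Sum>j<N. ?a i j * ((v $ j)^2 - v $ j * v $ i))" using S2 by simp
    also have "\<dots> = (\<Sum>i<N. \<Sum>j<N. ?a i j * (v $ i - v $ j)^2)"
      unfolding S_def by (simp add: sum.distrib[symmetric] algebra_simps power2_eq_square)
    finally show ?thesis .
  qed
  moreover have "0 \<le> (\<Sum>i<N. \<Sum>j<N. ?a i j * (v $ i - v $ j)^2)"
    by (intro sum_nonneg mult_nonneg_nonneg adj_nonneg) simp
  ultimately show ?thesis using q by simp
qed

lemma lap_integrable:
  assumes i: "i < N" and j: "j < N"
  shows "integrable (measure_pmf G) (\<lambda>E. laplacian N E $$ (i,j))"
  by (rule measure_pmf.integrable_const_bound[where B = "real N"]) (auto simp: lap_bound[OF i j])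

lemma lbar_entry:
  "i < N \<Longrightarrow> j < N \<Longrightarrow> expected_laplacian N G $$ (i,j) = measure_pmf.expectation G (\<lambda>E. laplacian N E $$ (i,j))"
  unfolding expected_laplacian_def by simp

lemma lbar_carrier: "expected_laplacian N G \<in> carrier_mat N N"
  unfolding expected_laplacian_def by simp

lemma lbar_sym: "transpose_mat (expected_laplacian N G) = expected_laplacian N G"
  by (rule eq_matI) (auto simp: lbar_entry expected_laplacian_def lap_sym)

lemma lbar_quad:
  assumes sg: "\<And>E. E \<in> set_pmf G \<Longrightarrow> simple_graph N E" and v: "v \<in> carrier_vec N"
  shows "0 \<le> v \<bullet> (expected_laplacian N G *\<^sub>v v)"
proof -
  have L: "expected_laplacian N G \<in> carrier_mat N N" by (rule lbar_carrier)
  have "v \<bullet> (expected_laplacian N G *\<^sub>v v) = (\<Sum>i<N. \<Sum>j<N. v $ i * measure_pmf.expectation G (\<lambda>E. laplacian N E $$ (i,j)) * v $ j)"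
    unfolding sp_mult_expand[OF L v v] by (intro sum.cong) (auto simp: lbar_entry)
  also have "\<dots> = (\<Sum>i<N. \<Sum>j<N. measure_pmf.expectation G (\<lambda>E. v $ i * laplacian N E $$ (i,j) * v $ j))"
    by (intro sum.cong) (auto simp: mult.commute mult.left_commute)
  also have "\<dots> = (\<Sum>i<N. measure_pmf.expectation G (\<lambda>E. \<Sum>j<N. v $ i * laplacian N E $$ (i,j) * v $ j))"
    by (intro sum.cong refl, subst Bochner_Integration.integral_sum) (auto intro!: integrable_mult_left integrable_mult_right lap_integrable)
  also have "\<dots> = measure_pmf.expectation G (\<lambda>E. \<Sum>i<N. \<Sum>j<N. v $ i * laplacian N E $$ (i,j) * v $ j)"
    by (subst Bochner_Integration.integral_sum) (auto intro!: Bochner_Integration.integrable_sum integrable_mult_left integrable_mult_right lap_integrable)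
  also have "\<dots> = measure_pmf.expectation G (\<lambda>E. v \<bullet> (laplacian N E *\<^sub>v v))"
    by (intro Bochner_Integration.integral_cong refl, subst sp_mult_expand[OF _ v v]) (auto simp: laplacian_def)
  also have "\<dots> \<ge> 0"
    by (intro integral_nonneg_AE AE_pmfI lap_quad_simple sg v)
  finally show ?thesis .
qed

lemma lbar_rowsum:
  assumes sg: "\<And>E. E \<in> set_pmf G \<Longrightarrow> simple_graph N E" and i: "i < N"
  shows "(\<Sum>j<N. expected_laplacian N G $$ (i,j)) = 0"
proof -
  have "(\<Sum>j<N. expected_laplacian N G $$ (i,j)) = (\<Sum>j<N. measure_pmf.expectation G (\<lambda>E. laplacian N E $$ (i,j)))"
    using i by (intro sum.cong) (auto simp: lbar_entry)
  also have "\<dots> = measure_pmf.expectation G (\<lambda>E. \<Sum>j<N. laplacian N E $$ (i,j))"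
    using i by (subst Bochner_Integration.integral_sum) (auto intro!: lap_integrable)
  also have "\<dots> = measure_pmf.expectation G (\<lambda>E. 0)"
    by (intro integral_cong_AE AE_pmfI) (auto simp: lap_rowsum_simple[OF sg i])
  finally show ?thesis by simp
qed

lemma lbar_const:
  assumes sg: "\<And>E. E \<in> set_pmf G \<Longrightarrow> simple_graph N E"
  shows "expected_laplacian N G *\<^sub>v Matrix.vec N (\<lambda>_. c) = 0\<^sub>v N"
proof (rule eq_vecI)
  fix i assume "i < dim_vec (0\<^sub>v N :: real Matrix.vec)"
  then have i: "i < N" by simp
  have "(expected_laplacian N G *\<^sub>v Matrix.vec N (\<lambda>_. c)) $ i = (\<Sum>j<N. expected_laplacian N G $$ (i,j)) * c"
    using i unfolding mult_mat_vec_def scalar_prod_def expected_laplacian_def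
    by (simp add: sum_distrib_right atLeast0LessThan)
  then show "(expected_laplacian N G *\<^sub>v Matrix.vec N (\<lambda>_. c)) $ i = 0\<^sub>v N $ i"
    using lbar_rowsum[OF sg i] i by simp
qed (simp add: expected_laplacian_def)



lemma mv_entry:
  assumes A: "A \<in> carrier_mat nr nc" and v: "v \<in> carrier_vec nc" and i: "i < nr"
  shows "(A *\<^sub>v v) $ i = (\<Sum>j<nc. A $$ (i,j) * v $ j)"
proof -
  have "(A *\<^sub>v v) $ i = Matrix.row A i \<bullet> v" using A i by simp
  also have "\<dots> = (\<Sum>j\<in>{0..<nc}. Matrix.row A i $ j * v $ j)" using v by (simp add: scalar_prod_def)
  also have "\<dots> = (\<Sum>j<nc. A $$ (i,j) * v $ j)" using A i by (auto simp: atLeast0LessThan intro!: sum.cong)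
  finally show ?thesis .
qed

lemma sorted_second_zero:
  fixes A :: "real multiset"
  assumes c: "count A 0 \<ge> 2" and nn: "\<And>x. x \<in># A \<Longrightarrow> 0 \<le> x"
  shows "sorted_list_of_multiset A ! 1 = 0"
proof -
  define xs where "xs = sorted_list_of_multiset A"
  have m: "mset xs = A" and s: "sorted xs" unfolding xs_def by auto
  have "\<exists>a b rest. xs = a # b # rest"
  proof (cases xs)
    case Nil then show ?thesis using c m by auto
  next
    case (Cons a t)
    show ?thesis
    proof (cases t)
      case Nil
      then have "count A 0 \<le> 1" using m Cons by auto
      then show ?thesis using c by simp
    next
      case (Cons b rest) then show ?thesis using \<open>xs = a # t\<close> by auto
    qed
  qed
  then obtain a b rest where xs: "xs = a # b # rest" by blast
  have "b = 0"
  proof (rule ccontr)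
    assume "b \<noteq> 0"
    moreover have "0 \<le> b" using nn m xs by auto
    ultimately have bp: "0 < b" by simp
    have "\<forall>z \<in> set rest. b \<le> z" using s xs by simp
    then have "0 \<notin> set rest" using bp by force
    then have h2: "count (mset rest) 0 = 0" by (simp add: count_eq_zero_iff)
    have "count A 0 \<le> 1 + count (mset rest) 0" using m xs bp by auto
    then have "count A 0 \<le> 1" using h2 by linarith
    then show False using c by simp
  qed
  then show ?thesis using xs unfolding xs_def by simp
qed

lemma sum_delete_reindex:
  fixes f :: "nat \<Rightarrow> real" assumes i: "i < N"
  shows "(\<Sum>j<N. f j) = f i + (\<Sum>l<N-1. f (if l < i then l else Suc l))"
proof -
  define g where "g = (\<lambda>l::nat. if l < i then l else Suc l)"
  have "(\<Sum>j<N. f j) = f i + (\<Sum>j\<in>{..<N}-{i}. f j)" using i by (simp add: sum.remove)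
  moreover have "bij_betw g {..<N-1} ({..<N}-{i})"
    unfolding bij_betw_def
  proof
    show "inj_on g {..<N-1}" unfolding inj_on_def g_def by auto
    show "g ` {..<N-1} = {..<N}-{i}"
    proof
      show "g ` {..<N-1} \<subseteq> {..<N}-{i}" using i unfolding g_def by auto
      show "{..<N}-{i} \<subseteq> g ` {..<N-1}"
      proof
        fix j assume j: "j \<in> {..<N}-{i}"
        show "j \<in> g ` {..<N-1}"
          by (rule image_eqI[where x="if j < i then j else j - 1"]) (use j i in \<open>auto simp: g_def\<close>)
      qed
    qed
  qed
  then have "(\<Sum>l<N-1. f (g l)) = (\<Sum>j\<in>{..<N}-{i}. f j)" by (rule sum.reindex_bij_betw)
  ultimately show ?thesis unfolding g_def by simp
qed

lemma lambda2_kernel: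
  fixes L :: "real mat"
  assumes L: "L \<in> carrier_mat N N" and N2: "2 \<le> N"
    and psd: "\<And>v. v \<in> carrier_vec N \<Longrightarrow> 0 \<le> v \<bullet> (L *\<^sub>v v)"
    and ones: "L *\<^sub>v Matrix.vec N (\<lambda>_. 1) = 0\<^sub>v N"
    and l2: "lambda2 L > 0"
    and v: "v \<in> carrier_vec N" and Lv: "L *\<^sub>v v = 0\<^sub>v N" and sv: "(\<Sum>i<N. v $ i) = 0"
  shows "v = 0\<^sub>v N"
proof (rule ccontr)
  assume vnz: "v \<noteq> 0\<^sub>v N"
  define one where "one = Matrix.vec N (\<lambda>_. 1::real)"
  define cp where "cp = char_poly L"
  have one: "one \<in> carrier_vec N" unfolding one_def by simp
  have dL: "dim_row L = N" using L by simp
  have ev0: "eigenvalue L 0"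
    unfolding eigenvalue_def eigenvector_def dL
  proof (intro exI[of _ one] conjI)
    show "one \<in> carrier_vec N" by (rule one)
    show "one \<noteq> 0\<^sub>v N"
    proof
      assume "one = 0\<^sub>v N"
      then have "one $ 0 = 0\<^sub>v N $ 0" by simp
      then show False using N2 unfolding one_def by simp
    qed
    show "L *\<^sub>v one = 0 \<cdot>\<^sub>v one" using ones unfolding one_def by (auto intro!: eq_vecI)
  qed
  have p0: "poly cp 0 = 0" using ev0 eigenvalue_root_char_poly[OF L] unfolding cp_def by simp
  have pd: "poly (char_poly (mat_delete L i i)) 0 = 0" if i: "i < N" for i
  proof -
    define y where "y = v - (v $ i) \<cdot>\<^sub>v one"
    have y: "y \<in> carrier_vec N" using v one y_def by simp
    have yent: "y $ k = v $ k - v $ i" if "k < N" for k using that v unfolding y_def one_def by simp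
    have yi: "y $ i = 0" using yent[OF i] by simp
    have Ly: "L *\<^sub>v y = 0\<^sub>v N"
    proof (rule eq_vecI)
      fix k assume "k < dim_vec (0\<^sub>v N :: real Matrix.vec)"
      then have k: "k < N" by simp
      have "(L *\<^sub>v y) $ k = (\<Sum>j<N. L $$ (k,j) * (v $ j - v $ i))"
        using mv_entry[OF L y k] yent by simp
      also have "\<dots> = (\<Sum>j<N. L $$ (k,j) * v $ j) - (\<Sum>j<N. L $$ (k,j)) * v $ i"
        by (simp add: algebra_simps sum_subtractf sum_distrib_right sum_distrib_left)
      also have "(\<Sum>j<N. L $$ (k,j) * v $ j) = 0" using mv_entry[OF L v k] Lv k by simp
      also have "(\<Sum>j<N. L $$ (k,j)) = 0"
        using mv_entry[OF L one k] ones k unfolding one_def by simp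
      finally show "(L *\<^sub>v y) $ k = 0\<^sub>v N $ k" using k by simp
    qed (use L in simp)
    have ynz: "y \<noteq> 0\<^sub>v N"
    proof
      assume y0: "y = 0\<^sub>v N"
      have vk: "v $ k = v $ i" if "k < N" for k
        using arg_cong[OF y0, of "\<lambda>w. w $ k"] yent[OF that] that by simp
      have "(\<Sum>k<N. v $ k) = real N * v $ i" using vk by simp
      then have "v $ i = 0" using sv N2 by simp
      then have "v = 0\<^sub>v N" using vk v by (intro eq_vecI) auto
      then show False using vnz by simp
    qed
    have "\<exists>j<N. y $ j \<noteq> 0"
    proof (rule ccontr)
      assume "\<not> (\<exists>j<N. y $ j \<noteq> 0)"
      then have "y = 0\<^sub>v N" using y by (intro eq_vecI) auto
      then show False using ynz by simp
    qed
    then obtain j where j: "j < N" "y $ j \<noteq> 0" by blast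
    have ji: "j \<noteq> i" using j yi by auto
    define g where "g = (\<lambda>l::nat. if l < i then l else Suc l)"
    define y' where "y' = Matrix.vec (N-1) (\<lambda>l. y $ g l)"
    have md: "mat_delete L i i \<in> carrier_mat (N-1) (N-1)" using mat_delete_carrier[OF L] .
    have y': "y' \<in> carrier_vec (N-1)" unfolding y'_def by simp
    have mdent: "mat_delete L i i $$ (k,l) = L $$ (g k, g l)" if "k < N-1" "l < N-1" for k l
      using that L unfolding mat_delete_def g_def by simp
    have "eigenvector (mat_delete L i i) y' 0"
      unfolding eigenvector_def
    proof (intro conjI)
      show "y' \<in> carrier_vec (dim_row (mat_delete L i i))" using md y' dL by simp
      show "y' \<noteq> 0\<^sub>v (dim_row (mat_delete L i i))"
      proof
        assume y0: "y' = 0\<^sub>v (dim_row (mat_delete L i i))"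
        define l where "l = (if j < i then j else j - 1)"
        have l: "l < N - 1" "g l = j" using j ji i unfolding l_def g_def by auto
        have "y' $ l = 0" using y0 l md dL by simp
        then show False using l j unfolding y'_def by simp
      qed
      show "mat_delete L i i *\<^sub>v y' = 0 \<cdot>\<^sub>v y'"
      proof (rule eq_vecI)
        fix k assume "k < dim_vec (0 \<cdot>\<^sub>v y')"
        then have k: "k < N - 1" unfolding y'_def by simp
        have gk: "g k < N" using k unfolding g_def by auto
        have "(mat_delete L i i *\<^sub>v y') $ k = (\<Sum>l<N-1. L $$ (g k, g l) * y $ g l)"
          using mv_entry[OF md y' k] mdent k unfolding y'_def by simp
        also have "\<dots> = (\<Sum>j<N. L $$ (g k, j) * y $ j) - L $$ (g k, i) * y $ i"
          using sum_delete_reindex[OF i, of "\<lambda>j. L $$ (g k, j) * y $ j"] unfolding g_def by simp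
        also have "(\<Sum>j<N. L $$ (g k, j) * y $ j) = (L *\<^sub>v y) $ g k" using mv_entry[OF L y gk] by simp
        also have "\<dots> = 0" using Ly gk by simp
        finally show "(mat_delete L i i *\<^sub>v y') $ k = (0 \<cdot>\<^sub>v y') $ k" using yi k unfolding y'_def by simp
      qed (use md y' dL in simp)
    qed
    then have "eigenvalue (mat_delete L i i) 0" unfolding eigenvalue_def by blast
    then show ?thesis using eigenvalue_root_char_poly[OF md] by simp
  qed
  have pderiv0: "poly (pderiv cp) 0 = 0"
    unfolding cp_def pderiv_char_poly[OF L] poly_sum using pd by simp
  have deg: "degree cp = N" using degree_monic_char_poly[OF L] unfolding cp_def by simp
  have cpnz: "cp \<noteq> 0" using deg N2 by auto
  have pdnz: "pderiv cp \<noteq> 0" using deg N2 by (simp add: pderiv_eq_0_iff)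
  have o1: "order 0 (pderiv cp) \<noteq> 0" using pderiv0 pdnz order_root by blast
  have o2: "order 0 cp = Suc (order 0 (pderiv cp))" using order_pderiv[OF cpnz p0] .
  have cnt: "count (proots cp) 0 \<ge> 2" using o1 o2 cpnz by simp
  have nn: "0 \<le> x" if "x \<in># proots cp" for x
  proof -
    have "x \<in> set_mset (proots cp)" using that by simp
    then have "poly cp x = 0" using cpnz by simp
    then have "eigenvalue L x" using eigenvalue_root_char_poly[OF L] unfolding cp_def by simp
    then obtain w where w: "w \<in> carrier_vec N" "w \<noteq> 0\<^sub>v N" "L *\<^sub>v w = x \<cdot>\<^sub>v w"
      unfolding eigenvalue_def eigenvector_def dL by auto
    have "0 \<le> w \<bullet> (L *\<^sub>v w)" by (rule psd[OF w(1)])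
    also have "\<dots> = x * (w \<bullet> w)" using w by simp
    finally have "0 \<le> x * (w \<bullet> w)" .
    moreover have "w \<bullet> w > 0" using sp_self_nonneg[of w] sp_self_zero[OF w(1)] w(2) by force
    ultimately show ?thesis by (simp add: zero_le_mult_iff)
  qed
  have "lambda2 L = 0" unfolding lambda2_def cp_def[symmetric] by (rule sorted_second_zero[OF cnt nn])
  then show False using l2 by simp
qed

lemma uniform_bound:
  fixes L :: "real mat"
  assumes L: "L \<in> carrier_mat N N" and sym: "transpose_mat L = L"
    and psd: "\<And>v. v \<in> carrier_vec N \<Longrightarrow> 0 \<le> v \<bullet> (L *\<^sub>v v)"
    and ker: "\<And>v. v \<in> carrier_vec N \<Longrightarrow> L *\<^sub>v v = 0\<^sub>v N \<Longrightarrow> (\<Sum>i<N. v $ i) = 0 \<Longrightarrow> v = 0\<^sub>v N"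
  shows "\<exists>c>0. \<forall>x\<in>carrier_vec N. (\<Sum>i<N. x $ i) = 0 \<longrightarrow> c * (x \<bullet> x) \<le> x \<bullet> (L *\<^sub>v x)"
proof -
  define J where "J = Matrix.mat N N (\<lambda>_. 1::real)"
  define S where "S = L + J"
  have J: "J \<in> carrier_mat N N" unfolding J_def by simp
  have S: "S \<in> carrier_mat N N" unfolding S_def using L J by simp
  have Jx: "x \<bullet> (J *\<^sub>v y) = (\<Sum>i<N. x $ i) * (\<Sum>i<N. y $ i)"
    if x: "x \<in> carrier_vec N" and y: "y \<in> carrier_vec N" for x y
    using sp_mult_expand[OF J x y] unfolding J_def by (simp add: sum_product)
  have Sx: "x \<bullet> (S *\<^sub>v y) = x \<bullet> (L *\<^sub>v y) + (\<Sum>i<N. x $ i) * (\<Sum>i<N. y $ i)"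
    if x: "x \<in> carrier_vec N" and y: "y \<in> carrier_vec N" for x y
  proof -
    have "S *\<^sub>v y = L *\<^sub>v y + J *\<^sub>v y" unfolding S_def using add_mult_distrib_mat_vec[OF L J y] .
    then have "x \<bullet> (S *\<^sub>v y) = x \<bullet> (L *\<^sub>v y) + x \<bullet> (J *\<^sub>v y)"
      using scalar_prod_add_distrib[OF x, of "L *\<^sub>v y" "J *\<^sub>v y"] L J y by simp
    then show ?thesis using Jx[OF x y] by simp
  qed
  have Lsym: "L $$ (i,j) = L $$ (j,i)" if "i < N" "j < N" for i j
    using arg_cong[OF sym, of "\<lambda>M. M $$ (j,i)"] that L by simp
  have Ssym: "transpose_mat S = S"
    by (rule eq_matI) (use L J Lsym in \<open>auto simp: S_def J_def\<close>)
  have Spsd: "0 \<le> v \<bullet> (S *\<^sub>v v)" if v: "v \<in> carrier_vec N" for v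
    using Sx[OF v v] psd[OF v] zero_le_square[of "\<Sum>i<N. v $ i"] by simp
  have Sker: "v = 0\<^sub>v N" if v: "v \<in> carrier_vec N" and Sv: "S *\<^sub>v v = 0\<^sub>v N" for v
  proof -
    have "v \<bullet> (S *\<^sub>v v) = 0" using v Sv by simp
    moreover have "0 \<le> (\<Sum>i<N. v $ i) * (\<Sum>i<N. v $ i)" by (rule zero_le_square)
    ultimately have q0: "v \<bullet> (L *\<^sub>v v) = 0" and ss: "(\<Sum>i<N. v $ i) * (\<Sum>i<N. v $ i) = 0"
      using Sx[OF v v] psd[OF v] by linarith+
    then have s0: "(\<Sum>i<N. v $ i) = 0" by simp
    have Lv: "L *\<^sub>v v \<in> carrier_vec N" using L v by simp
    have "((L *\<^sub>v v) \<bullet> (L *\<^sub>v v))^2 \<le> ((L *\<^sub>v v) \<bullet> (L *\<^sub>v (L *\<^sub>v v))) * (v \<bullet> (L *\<^sub>v v))"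
      by (rule psd_cs[OF L sym psd Lv v])
    then have "(L *\<^sub>v v) \<bullet> (L *\<^sub>v v) = 0" using q0 by simp
    then have "L *\<^sub>v v = 0\<^sub>v N" using sp_self_zero[OF Lv] by simp
    then show ?thesis using ker v s0 by simp
  qed
  define T where "T = minv S"
  have Tp: "T \<in> carrier_mat N N" "S * T = 1\<^sub>m N" using minv_props_ker[OF S Sker] unfolding T_def by auto
  have main: "x \<bullet> x \<le> (absum T + 1) * (x \<bullet> (S *\<^sub>v x))" if x: "x \<in> carrier_vec N" for x
  proof -
    define y where "y = T *\<^sub>v x"
    have y: "y \<in> carrier_vec N" using Tp x unfolding y_def by simp
    have Sy: "S *\<^sub>v y = x"
    proof -
      have "S *\<^sub>v y = (S * T) *\<^sub>v x" unfolding y_def by (rule assoc_mult_mat_vec[symmetric, OF S Tp(1) x])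
      then show ?thesis using Tp x by simp
    qed
    have a: "0 \<le> x \<bullet> (S *\<^sub>v x)" using Spsd[OF x] .
    have "(x \<bullet> x)^2 = (x \<bullet> (S *\<^sub>v y))^2" using Sy by simp
    also have "\<dots> \<le> (x \<bullet> (S *\<^sub>v x)) * (y \<bullet> (S *\<^sub>v y))" by (rule psd_cs[OF S Ssym Spsd x y])
    also have "y \<bullet> (S *\<^sub>v y) = x \<bullet> (T *\<^sub>v x)" unfolding Sy using comm_scalar_prod[OF y x] unfolding y_def by simp
    also have "(x \<bullet> (S *\<^sub>v x)) * (x \<bullet> (T *\<^sub>v x)) \<le> (x \<bullet> (S *\<^sub>v x)) * (absum T * (x \<bullet> x))"
    proof (rule mult_left_mono[OF _ a])
      have b: "\<bar>x \<bullet> (T *\<^sub>v x)\<bar> \<le> absum T * vnorm x * vnorm x" by (rule bil_bound[OF Tp(1) x x])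
      have e: "absum T * vnorm x * vnorm x = absum T * (x \<bullet> x)"
        using vnorm_sq[of x] by (simp add: power2_eq_square mult.assoc)
      show "x \<bullet> (T *\<^sub>v x) \<le> absum T * (x \<bullet> x)" using b e abs_ge_self[of "x \<bullet> (T *\<^sub>v x)"] by linarith
    qed
    finally have h: "(x \<bullet> x) * (x \<bullet> x) \<le> ((x \<bullet> (S *\<^sub>v x)) * absum T) * (x \<bullet> x)"
      by (simp add: power2_eq_square mult_ac)
    show ?thesis
    proof (cases "x \<bullet> x = 0")
      case True then show ?thesis using a absum_nonneg[of T] by simp
    next
      case False
      then have "x \<bullet> x > 0" using sp_self_nonneg[of x] by simp
      then have "x \<bullet> x \<le> (x \<bullet> (S *\<^sub>v x)) * absum T" using h by (simp add: mult_le_cancel_right)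
      then show ?thesis using a by (simp add: algebra_simps)
    qed
  qed
  define c where "c = 1 / (absum T + 1)"
  have cp: "c > 0" unfolding c_def using absum_nonneg[of T] by simp
  have "\<forall>x\<in>carrier_vec N. (\<Sum>i<N. x $ i) = 0 \<longrightarrow> c * (x \<bullet> x) \<le> x \<bullet> (L *\<^sub>v x)"
  proof (intro ballI impI)
    fix x :: "real Matrix.vec" assume x: "x \<in> carrier_vec N" and s: "(\<Sum>i<N. x $ i) = 0"
    have "x \<bullet> (S *\<^sub>v x) = x \<bullet> (L *\<^sub>v x)" using Sx[OF x x] s by simp
    then show "c * (x \<bullet> x) \<le> x \<bullet> (L *\<^sub>v x)" using main[OF x] absum_nonneg[of T]
      unfolding c_def by (simp add: field_simps)
  qed
  then show ?thesis using cp by blast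
qed



lemma sum_split_NM:
  fixes f :: "nat \<Rightarrow> real"
  shows "(\<Sum>i<N*M. f i) = (\<Sum>k<N. \<Sum>m<M. f (k*M + m))"
proof -
  have "(\<Sum>i<N*M. f i) = (\<Sum>k<N. \<Sum>i\<in>{k*M..<k*M+M}. f i)" by (rule sum.nat_group[symmetric])
  also have "\<dots> = (\<Sum>k<N. \<Sum>m<M. f (k*M + m))"
  proof (rule sum.cong[OF refl])
    fix k
    have "(\<Sum>i\<in>{0+k*M..<M+k*M}. f i) = (\<Sum>m\<in>{0..<M}. f (m + k*M))" by (rule sum.shift_bounds_nat_ivl)
    then show "(\<Sum>i\<in>{k*M..<k*M+M}. f i) = (\<Sum>m<M. f (k*M + m))" by (simp add: atLeast0LessThan add.commute)
  qed
  finally show ?thesis .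
qed

lemma idx_div: "m < (M::nat) \<Longrightarrow> (k*M+m) div M = k" by simp
lemma idx_mod: "m < (M::nat) \<Longrightarrow> (k*M+m) mod M = m" by simp
lemma idx_lt: assumes "k < N" "m < (M::nat)" shows "k*M+m < N*M"
proof -
  have "k*M + m < (k+1)*M" using assms by simp
  also have "(k+1)*M \<le> N*M" using assms by (intro mult_le_mono1) simp
  finally show ?thesis .
qed

definition comp :: "nat \<Rightarrow> nat \<Rightarrow> real Matrix.vec \<Rightarrow> nat \<Rightarrow> real Matrix.vec" where
  "comp N M z m = Matrix.vec N (\<lambda>k. z $ (k*M+m))"

lemma comp_carrier[simp]: "comp N M z m \<in> carrier_vec N" unfolding comp_def by simp

lemma kron_carrier: "L \<in> carrier_mat N N \<Longrightarrow> kron L (1\<^sub>m M) \<in> carrier_mat (N*M) (N*M)"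
  unfolding kron_def by simp

lemma kron_entry:
  assumes L: "L \<in> carrier_mat N N" and k: "k < N" "l < N" and m: "m < M" "m' < M"
  shows "kron L (1\<^sub>m M) $$ (k*M+m, l*M+m') = L $$ (k,l) * (if m = m' then 1 else 0)"
  using L idx_lt[OF k(1) m(1)] idx_lt[OF k(2) m(2)] m unfolding kron_def by simp

lemma kron_quad:
  assumes L: "L \<in> carrier_mat N N" and z: "z \<in> carrier_vec (N*M)" and w: "w \<in> carrier_vec (N*M)"
  shows "z \<bullet> (kron L (1\<^sub>m M) *\<^sub>v w) = (\<Sum>m<M. comp N M z m \<bullet> (L *\<^sub>v comp N M w m))"
proof -
  let ?K = "kron L (1\<^sub>m M)"
  have K: "?K \<in> carrier_mat (N*M) (N*M)" by (rule kron_carrier[OF L])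
  have "z \<bullet> (?K *\<^sub>v w) = (\<Sum>i<N*M. \<Sum>j<N*M. z $ i * ?K $$ (i,j) * w $ j)" by (rule sp_mult_expand[OF K z w])
  also have "\<dots> = (\<Sum>k<N. \<Sum>m<M. \<Sum>l<N. \<Sum>m'<M. z $ (k*M+m) * ?K $$ (k*M+m, l*M+m') * w $ (l*M+m'))"
    by (simp add: sum_split_NM)
  also have "\<dots> = (\<Sum>k<N. \<Sum>m<M. \<Sum>l<N. \<Sum>m'<M. if m = m' then z $ (k*M+m) * L $$ (k,l) * w $ (l*M+m') else 0)"
    by (intro sum.cong refl) (simp add: kron_entry[OF L])
  also have "\<dots> = (\<Sum>k<N. \<Sum>m<M. \<Sum>l<N. z $ (k*M+m) * L $$ (k,l) * w $ (l*M+m))"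
    by (intro sum.cong refl) simp
  also have "\<dots> = (\<Sum>m<M. \<Sum>k<N. \<Sum>l<N. z $ (k*M+m) * L $$ (k,l) * w $ (l*M+m))"
    by (rule sum.swap)
  also have "\<dots> = (\<Sum>m<M. comp N M z m \<bullet> (L *\<^sub>v comp N M w m))"
    unfolding sp_mult_expand[OF L comp_carrier comp_carrier] by (auto simp: comp_def intro!: sum.cong)
  finally show ?thesis .
qed

lemma sp_kron:
  assumes z: "z \<in> carrier_vec (N*M)" and a: "a \<in> carrier_vec M"
  shows "z \<bullet> kron_ones N a = (\<Sum>m<M. a $ m * (\<Sum>k<N. z $ (k*M+m)))"
proof -
  have "z \<bullet> kron_ones N a = (\<Sum>i<N*M. z $ i * a $ (i mod M))"
    using z a unfolding scalar_prod_def kron_ones_def by (simp add: atLeast0LessThan)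
  also have "\<dots> = (\<Sum>k<N. \<Sum>m<M. z $ (k*M+m) * a $ m)" by (simp add: sum_split_NM)
  also have "\<dots> = (\<Sum>m<M. a $ m * (\<Sum>k<N. z $ (k*M+m)))"
    by (subst sum.swap) (simp add: sum_distrib_left mult_ac)
  finally show ?thesis .
qed

lemma kron_ones_carrier[simp]: "a \<in> carrier_vec M \<Longrightarrow> kron_ones N a \<in> carrier_vec (N*M)"
  unfolding kron_ones_def by simp

lemma kron_ones_minus:
  assumes "a \<in> carrier_vec M" "b \<in> carrier_vec M"
  shows "kron_ones N a - kron_ones N b = kron_ones N (a - b)"
proof -
  have md: "i mod M < M" if "i < N * M" for i
    using that by (cases "M = 0") auto
  show ?thesis using assms md unfolding kron_ones_def by (intro eq_vecI) auto
qed

lemma sp_self_split: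
  assumes z: "z \<in> carrier_vec (N*M)"
  shows "z \<bullet> z = (\<Sum>m<M. comp N M z m \<bullet> comp N M z m)"
proof -
  have "z \<bullet> z = (\<Sum>i<N*M. (z $ i)^2)" using z by (simp add: sp_self)
  also have "\<dots> = (\<Sum>k<N. \<Sum>m<M. (z $ (k*M+m))^2)" by (simp add: sum_split_NM)
  also have "\<dots> = (\<Sum>m<M. \<Sum>k<N. (z $ (k*M+m))^2)" by (rule sum.swap)
  also have "\<dots> = (\<Sum>m<M. comp N M z m \<bullet> comp N M z m)"
    by (intro sum.cong refl) (simp add: sp_self comp_def)
  finally show ?thesis .
qed

lemma vec_minus_zero:
  assumes "q - p = 0\<^sub>v n" "q \<in> carrier_vec n" "p \<in> carrier_vec (n::nat)"
  shows "q = (p :: real Matrix.vec)"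
proof (rule eq_vecI)
  fix i assume "i < dim_vec p"
  then have i: "i < n" using assms by simp
  have h1: "(q - p) $ i = q $ i - p $ i" using i assms(3) by simp
  have h2: "(q - p) $ i = 0" using assms(1) i by simp
  show "q $ i = p $ i" using h1 h2 by simp
qed (use assms in simp)

definition abar :: "nat \<Rightarrow> nat \<Rightarrow> real Matrix.vec \<Rightarrow> real Matrix.vec" where
  "abar N M z = Matrix.vec M (\<lambda>m. (1 / real N) * (\<Sum>k<N. z $ (k*M+m)))"

lemma vec_mm1:
  assumes "z \<in> carrier_vec n" "x \<in> carrier_vec n"
  shows "z - (z - x) = (x :: real Matrix.vec)"
proof (rule eq_vecI)
  fix i assume "i < dim_vec x"
  then have i: "i < n" using assms by simp
  show "(z - (z - x)) $ i = x $ i" using i assms by simp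
qed (use assms in simp)

lemma vec_mm2:
  assumes "z \<in> carrier_vec n" "x \<in> carrier_vec n" "y \<in> carrier_vec n"
  shows "(z - y) - (z - x) = x - (y :: real Matrix.vec)"
proof (rule eq_vecI)
  fix i assume "i < dim_vec (x - y)"
  then have i: "i < n" using assms by simp
  show "((z - y) - (z - x)) $ i = (x - y) $ i" using i assms by simp
qed (use assms in simp)

lemma proj_perp_eq:
  assumes z: "z \<in> carrier_vec (N*M)" and N: "N > 0"
  shows "proj_perp N M z = z - kron_ones N (abar N M z)"
    and "z - kron_ones N (abar N M z) \<in> consensus_perp N M"
proof -
  define a where "a = abar N M z"
  define p where "p = z - kron_ones N a"
  have a: "a \<in> carrier_vec M" unfolding a_def abar_def by simp
  have ka: "kron_ones N a \<in> carrier_vec (N*M)" using a by simp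
  have p: "p \<in> carrier_vec (N*M)" unfolding p_def using z ka by simp
  have kk: "kron_ones N a \<bullet> kron_ones N b = (\<Sum>m<M. b $ m * (\<Sum>k<N. z $ (k*M+m)))"
    if b: "b \<in> carrier_vec M" for b
  proof -
    have "kron_ones N a \<bullet> kron_ones N b = (\<Sum>m<M. b $ m * (\<Sum>k<N. kron_ones N a $ (k*M+m)))"
      by (rule sp_kron[OF ka b])
    also have "\<dots> = (\<Sum>m<M. b $ m * (\<Sum>k<N. z $ (k*M+m)))"
    proof (rule sum.cong[OF refl])
      fix m assume m: "m \<in> {..<M}"
      have "(\<Sum>k<N. kron_ones N a $ (k*M+m)) = (\<Sum>k<N. a $ m)"
      proof (rule sum.cong[OF refl])
        fix k assume k: "k \<in> {..<N}"
        have lt: "k*M+m < N*M" using k m by (intro idx_lt) auto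
        have md: "(k*M+m) mod M = m" using m by simp
        show "kron_ones N a $ (k*M+m) = a $ m" using lt a m unfolding kron_ones_def md by simp
      qed
      also have "\<dots> = (\<Sum>k<N. z $ (k*M+m))" using m N unfolding a_def abar_def by simp
      finally show "b $ m * (\<Sum>k<N. kron_ones N a $ (k*M+m)) = b $ m * (\<Sum>k<N. z $ (k*M+m))" by simp
    qed
    finally show ?thesis .
  qed
  have pperp: "p \<in> consensus_perp N M"
    unfolding consensus_perp_def consensus_def
  proof (intro CollectI conjI p ballI)
    fix c assume "c \<in> {kron_ones N b |b. b \<in> carrier_vec M}"
    then obtain b where b: "b \<in> carrier_vec M" and c: "c = kron_ones N b" by blast
    have kb: "kron_ones N b \<in> carrier_vec (N*M)" using b by simp
    have "p \<bullet> c = z \<bullet> kron_ones N b - kron_ones N a \<bullet> kron_ones N b"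
      unfolding p_def c by (rule minus_scalar_prod_distrib[OF z ka kb])
    then show "p \<bullet> c = 0" using sp_kron[OF z b] kk[OF b] by simp
  qed
  have zp: "z - p = kron_ones N a" unfolding p_def by (rule vec_mm1[OF z ka])
  have zpc: "z - p \<in> consensus N M" unfolding zp consensus_def using a by blast
  have uniq: "q = p" if q: "q \<in> consensus_perp N M" "z - q \<in> consensus N M" for q
  proof -
    obtain b where b: "b \<in> carrier_vec M" and zq: "z - q = kron_ones N b"
      using q(2) unfolding consensus_def by blast
    have qc: "q \<in> carrier_vec (N*M)" using q(1) unfolding consensus_perp_def by simp
    have kb: "kron_ones N b \<in> carrier_vec (N*M)" using b by simp
    have "q = z - (z - q)" by (rule vec_mm1[OF z qc, symmetric])
    then have qz: "q = z - kron_ones N b" unfolding zq .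
    have "q - p = kron_ones N a - kron_ones N b" unfolding qz p_def by (rule vec_mm2[OF z ka kb])
    then have qp: "q - p = kron_ones N (a - b)" using kron_ones_minus[OF a b, of N] by simp
    have amb: "a - b \<in> carrier_vec M" using a b by simp
    have inC: "q - p \<in> consensus N M" unfolding qp consensus_def using amb by blast
    have "q \<bullet> (q - p) = 0" using q(1) inC unfolding consensus_perp_def by blast
    moreover have "p \<bullet> (q - p) = 0" using pperp inC unfolding consensus_perp_def by blast
    moreover have "(q - p) \<bullet> (q - p) = q \<bullet> (q - p) - p \<bullet> (q - p)"
      by (rule minus_scalar_prod_distrib[OF qc p]) (use qc p in simp)
    ultimately have "(q - p) \<bullet> (q - p) = 0" by simp
    then have "q - p = 0\<^sub>v (N*M)" by (rule sp_self_zero[rotated]) (use qc p in simp)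
    then show "q = p" using qc p by (rule vec_minus_zero)
  qed
  have "proj_perp N M z = p"
    unfolding proj_perp_def
  proof (rule the_equality)
    show "p \<in> consensus_perp N M \<and> z - p \<in> consensus N M" using pperp zpc by blast
    fix q assume "q \<in> consensus_perp N M \<and> z - q \<in> consensus N M"
    then show "q = p" using uniq by blast
  qed
  then show "proj_perp N M z = z - kron_ones N (abar N M z)" unfolding p_def a_def .
  show "z - kron_ones N (abar N M z) \<in> consensus_perp N M" using pperp unfolding p_def a_def .
qed

lemma comp_sum_zero:
  assumes p: "p \<in> consensus_perp N M" and m: "m < M"
  shows "(\<Sum>k<N. comp N M p m $ k) = 0"
proof -
  have pc: "p \<in> carrier_vec (N*M)" using p unfolding consensus_perp_def by simp
  have u: "unit_vec M m \<in> carrier_vec M" by simp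
  have "kron_ones N (unit_vec M m) \<in> consensus N M" unfolding consensus_def using u by blast
  then have "p \<bullet> kron_ones N (unit_vec M m) = 0" using p unfolding consensus_perp_def by auto
  moreover have "p \<bullet> kron_ones N (unit_vec M m) = (\<Sum>k<N. p $ (k*M+m))"
  proof -
    have "p \<bullet> kron_ones N (unit_vec M m) = (\<Sum>ma<M. unit_vec M m $ ma * (\<Sum>k<N. p $ (k*M+ma)))"
      by (rule sp_kron[OF pc u])
    also have "\<dots> = (\<Sum>ma<M. if ma = m then (\<Sum>k<N. p $ (k*M+ma)) else 0)"
      by (intro sum.cong refl) (auto simp: unit_vec_def)
    also have "\<dots> = (\<Sum>k<N. p $ (k*M+m))" using m by simp
    finally show ?thesis .
  qed
  ultimately show ?thesis unfolding comp_def by simp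
qed

lemma sym_one_perp:
  fixes L :: "real mat"
  assumes L: "L \<in> carrier_mat N N" and sym: "transpose_mat L = L"
    and ones: "\<And>c. L *\<^sub>v Matrix.vec N (\<lambda>_. c) = 0\<^sub>v N"
    and p: "p \<in> carrier_vec N"
  shows "(p + Matrix.vec N (\<lambda>_. c)) \<bullet> (L *\<^sub>v (p + Matrix.vec N (\<lambda>_. c))) = p \<bullet> (L *\<^sub>v p)"
proof -
  let ?o = "Matrix.vec N (\<lambda>_. c)"
  have o: "?o \<in> carrier_vec N" by simp
  have e1: "L *\<^sub>v (p + ?o) = L *\<^sub>v p" using mult_add_distrib_mat_vec[OF L p o] ones[of c] L p by simp
  have Lp: "L *\<^sub>v p \<in> carrier_vec N" using L p by simp
  have "?o \<bullet> (L *\<^sub>v p) = (transpose_mat L *\<^sub>v ?o) \<bullet> p" using transpose_vec_mult_scalar[OF L p o] by simp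
  also have "\<dots> = 0" using sym ones[of c] p by simp
  finally have e2: "?o \<bullet> (L *\<^sub>v p) = 0" .
  show ?thesis unfolding e1 using add_scalar_prod_distrib[OF p o Lp] e2 by simp
qed



lemma block_mult_vec_rect:
  assumes A: "A \<in> carrier_mat n1 c1" and D: "D \<in> carrier_mat n2 c2"
    and a: "a \<in> carrier_vec c1" and d: "d \<in> carrier_vec c2"
  shows "four_block_mat A (0\<^sub>m n1 c2) (0\<^sub>m n2 c1) D *\<^sub>v (a @\<^sub>v d) = A *\<^sub>v a @\<^sub>v D *\<^sub>v d"
  by (subst four_block_mat_mult_vec[OF A _ _ D a d], insert A D a d, auto)

lemma kron_ones_Suc:
  assumes a: "a \<in> carrier_vec M"
  shows "kron_ones (Suc n) a = a @\<^sub>v kron_ones n a"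
proof (rule eq_vecI)
  show "dim_vec (kron_ones (Suc n) a) = dim_vec (a @\<^sub>v kron_ones n a)"
    using a unfolding kron_ones_def by simp
  fix i assume "i < dim_vec (a @\<^sub>v kron_ones n a)"
  then have i: "i < M + n * M" using a unfolding kron_ones_def by simp
  show "kron_ones (Suc n) a $ i = (a @\<^sub>v kron_ones n a) $ i"
  proof (cases "i < M")
    case True then show ?thesis using a i unfolding kron_ones_def by simp
  next
    case False
    then have "i mod M = (i - M) mod M" by (simp add: le_mod_geq)
    then show ?thesis using a i False unfolding kron_ones_def by simp
  qed
qed

lemma sum_list_const_nat: "(\<And>x. x \<in> set xs \<Longrightarrow> f x = (c::nat)) \<Longrightarrow> sum_list (map f xs) = length xs * c"
  by (induction xs) auto

lemma diag_block_quad: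
  assumes len: "length Ks = length Hs"
    and dims: "\<And>i. i < length Hs \<Longrightarrow> Hs!i \<in> carrier_mat (dim_row (Hs!i)) M \<and> Ks!i \<in> carrier_mat M (dim_row (Hs!i))"
    and a: "a \<in> carrier_vec M"
  shows "kron_ones (length Hs) a \<bullet> (diag_block_mat Ks *\<^sub>v (diag_block_mat Hs *\<^sub>v kron_ones (length Hs) a))
         = (\<Sum>i<length Hs. a \<bullet> (Ks!i *\<^sub>v (Hs!i *\<^sub>v a)))"
  using len dims
proof (induction Hs arbitrary: Ks)
  case Nil
  then show ?case unfolding kron_ones_def by (simp add: scalar_prod_def)
next
  case (Cons H Hs Ks0)
  obtain K Ks where Ks0: "Ks0 = K # Ks" using Cons.prems(1) by (cases Ks0) auto
  let ?n = "length Hs"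
  define mH where "mH = dim_row H"
  define D where "D = diag_block_mat Hs"
  define E where "E = diag_block_mat Ks"
  have H: "H \<in> carrier_mat mH M" and K: "K \<in> carrier_mat M mH"
    using Cons.prems(2)[of 0] Ks0 unfolding mH_def by auto
  have lenKs: "length Ks = ?n" using Cons.prems(1) Ks0 by simp
  have dims': "Hs!i \<in> carrier_mat (dim_row (Hs!i)) M \<and> Ks!i \<in> carrier_mat M (dim_row (Hs!i))" if "i < ?n" for i
    using Cons.prems(2)[of "Suc i"] that Ks0 by auto
  have IH: "kron_ones ?n a \<bullet> (E *\<^sub>v (D *\<^sub>v kron_ones ?n a)) = (\<Sum>i<?n. a \<bullet> (Ks!i *\<^sub>v (Hs!i *\<^sub>v a)))"
    using Cons.IH[OF lenKs dims'] unfolding D_def E_def by simp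
  have colD: "dim_col D = ?n * M" unfolding D_def dim_diag_block_mat
  proof (rule sum_list_const_nat)
    fix x assume "x \<in> set Hs"
    then obtain i where i: "i < length Hs" "x = Hs!i" by (auto simp: in_set_conv_nth)
    then show "dim_col x = M" using dims'[of i] by auto
  qed
  have rowE: "dim_row E = ?n * M" unfolding E_def dim_diag_block_mat lenKs[symmetric]
  proof (rule sum_list_const_nat)
    fix x assume "x \<in> set Ks"
    then obtain i where i: "i < length Ks" "x = Ks!i" by (auto simp: in_set_conv_nth)
    then show "dim_row x = M" using dims'[of i] lenKs by auto
  qed
  have "map dim_col Ks = map dim_row Hs"
    by (rule nth_equalityI) (use dims' lenKs in auto)
  then have colE: "dim_col E = dim_row D" unfolding E_def D_def dim_diag_block_mat by simp
  have D: "D \<in> carrier_mat (dim_row D) (?n * M)" using colD by auto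
  have E: "E \<in> carrier_mat (?n * M) (dim_row D)" using colE rowE by auto
  have k: "kron_ones ?n a \<in> carrier_vec (?n * M)" using a by simp
  have hc: "dim_col H = M" and hr: "dim_row H = mH" using H by auto
  have kc: "dim_col K = mH" and kr: "dim_row K = M" using K by auto
  have dH0: "diag_block_mat (H # Hs) = four_block_mat H (0\<^sub>m (dim_row H) (dim_col D)) (0\<^sub>m (dim_row D) (dim_col H)) D"
    unfolding D_def diag_block_mat.simps Let_def ..
  have dH: "diag_block_mat (H # Hs) = four_block_mat H (0\<^sub>m mH (?n * M)) (0\<^sub>m (dim_row D) M) D"
    using dH0 unfolding hc hr colD .
  have dK0: "diag_block_mat (K # Ks) = four_block_mat K (0\<^sub>m (dim_row K) (dim_col E)) (0\<^sub>m (dim_row E) (dim_col K)) E"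
    unfolding E_def diag_block_mat.simps Let_def ..
  have dK: "diag_block_mat (K # Ks) = four_block_mat K (0\<^sub>m M (dim_row D)) (0\<^sub>m (?n * M) mH) E"
    using dK0 unfolding kc kr colE rowE .
  have Ha: "H *\<^sub>v a \<in> carrier_vec mH" by (rule mult_mat_vec_carrier[OF H a])
  have Dk: "D *\<^sub>v kron_ones ?n a \<in> carrier_vec (dim_row D)" by (rule mult_mat_vec_carrier[OF D k])
  have step1: "diag_block_mat (H # Hs) *\<^sub>v (a @\<^sub>v kron_ones ?n a) = (H *\<^sub>v a) @\<^sub>v (D *\<^sub>v kron_ones ?n a)"
    unfolding dH by (rule block_mult_vec_rect[OF H D a k])
  have step2: "diag_block_mat Ks0 *\<^sub>v ((H *\<^sub>v a) @\<^sub>v (D *\<^sub>v kron_ones ?n a)) = (K *\<^sub>v (H *\<^sub>v a)) @\<^sub>v (E *\<^sub>v (D *\<^sub>v kron_ones ?n a))"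
    unfolding Ks0 dK by (rule block_mult_vec_rect[OF K E Ha Dk])
  have KHa: "K *\<^sub>v (H *\<^sub>v a) \<in> carrier_vec M" by (rule mult_mat_vec_carrier[OF K Ha])
  have EDk: "E *\<^sub>v (D *\<^sub>v kron_ones ?n a) \<in> carrier_vec (?n * M)" by (rule mult_mat_vec_carrier[OF E Dk])
  have "kron_ones (length (H # Hs)) a \<bullet> (diag_block_mat Ks0 *\<^sub>v (diag_block_mat (H # Hs) *\<^sub>v kron_ones (length (H # Hs)) a))
     = (a @\<^sub>v kron_ones ?n a) \<bullet> ((K *\<^sub>v (H *\<^sub>v a)) @\<^sub>v (E *\<^sub>v (D *\<^sub>v kron_ones ?n a)))"
    using kron_ones_Suc[OF a, of ?n] by (simp only: step1 step2 length_Cons)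
  also have "\<dots> = a \<bullet> (K *\<^sub>v (H *\<^sub>v a)) + kron_ones ?n a \<bullet> (E *\<^sub>v (D *\<^sub>v kron_ones ?n a))"
    by (rule scalar_prod_append[OF a k KHa EDk])
  also have "\<dots> = (\<Sum>i<length (H # Hs). a \<bullet> (Ks0!i *\<^sub>v ((H # Hs)!i *\<^sub>v a)))"
    unfolding IH Ks0 by (simp only: sum.lessThan_Suc_shift length_Cons nth_Cons_0 nth_Cons_Suc)
  finally show ?case .
qed

lemma sigma_sum:
  fixes Y Sg :: "real mat" and G :: "nat \<Rightarrow> real mat"
  assumes Y: "Y \<in> carrier_mat M M" and Sg: "Sg \<in> carrier_mat M M" and YS: "Y * Sg = 1\<^sub>m M"
    and G: "\<And>n. n < N \<Longrightarrow> G n \<in> carrier_mat M M"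
    and Sge: "\<And>i j. i < M \<Longrightarrow> j < M \<Longrightarrow> Sg $$ (i,j) = (1 / real N) * (\<Sum>n<N. G n $$ (i,j))"
    and N: "N > 0" and a: "a \<in> carrier_vec M"
  shows "(\<Sum>n<N. a \<bullet> (Y *\<^sub>v (G n *\<^sub>v a))) = real N * (a \<bullet> a)"
proof -
  define w where "w = Sg *\<^sub>v a"
  have w: "w \<in> carrier_vec M" unfolding w_def using Sg a by simp
  have Ga: "G n *\<^sub>v a \<in> carrier_vec M" if "n < N" for n using G[OF that] a by simp
  have gs: "(\<Sum>n<N. (G n *\<^sub>v a) $ j) = real N * w $ j" if j: "j < M" for j
  proof -
    have "(\<Sum>n<N. (G n *\<^sub>v a) $ j) = (\<Sum>n<N. \<Sum>l<M. G n $$ (j,l) * a $ l)"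
      by (rule sum.cong[OF refl]) (simp add: mv_entry[OF G a j])
    also have "\<dots> = (\<Sum>l<M. (\<Sum>n<N. G n $$ (j,l)) * a $ l)"
      by (subst sum.swap) (simp add: sum_distrib_right)
    also have "\<dots> = (\<Sum>l<M. (real N * Sg $$ (j,l)) * a $ l)"
      by (rule sum.cong[OF refl]) (use N j in \<open>simp add: Sge\<close>)
    also have "\<dots> = real N * w $ j" unfolding w_def using mv_entry[OF Sg a j]
      by (simp add: sum_distrib_left mult_ac)
    finally show ?thesis .
  qed
  have "(\<Sum>n<N. a \<bullet> (Y *\<^sub>v (G n *\<^sub>v a))) = (\<Sum>n<N. \<Sum>i<M. \<Sum>j<M. a $ i * Y $$ (i,j) * (G n *\<^sub>v a) $ j)"
    by (rule sum.cong[OF refl]) (simp add: sp_mult_expand[OF Y a Ga])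
  also have "\<dots> = (\<Sum>i<M. \<Sum>j<M. \<Sum>n<N. a $ i * Y $$ (i,j) * (G n *\<^sub>v a) $ j)"
    by (subst sum.swap, rule sum.cong[OF refl], rule sum.swap)
  also have "\<dots> = (\<Sum>i<M. \<Sum>j<M. a $ i * Y $$ (i,j) * (real N * w $ j))"
    by (intro sum.cong refl) (simp add: sum_distrib_left[symmetric] gs)
  also have "\<dots> = real N * (a \<bullet> (Y *\<^sub>v w))"
    by (simp add: sp_mult_expand[OF Y a w] sum_distrib_left mult_ac)
  also have "Y *\<^sub>v w = a" unfolding w_def using assoc_mult_mat_vec[OF Y Sg a, symmetric] YS a by simp
  finally show ?thesis .
qed

lemma ratio_eventually:
  fixes a b t1 t2 d :: real
  assumes a: "a > 0" and b: "b > 0" and t: "t2 < t1" and d: "d > 0"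
  shows "\<exists>t0::nat. \<forall>t\<ge>t0. a / (real t + 1) powr t1 \<le> d * (b / (real t + 1) powr t2)"
proof -
  define r where "r = t1 - t2"
  have r: "r > 0" using t unfolding r_def by simp
  have lim: "LIM x sequentially. (real x + 1) :> at_top"
    using filterlim_tendsto_add_at_top[OF tendsto_const filterlim_real_sequentially, of 1]
    by (simp add: add.commute)
  have "((\<lambda>x. (real x + 1) powr (-r)) \<longlongrightarrow> 0) sequentially"
    by (rule tendsto_neg_powr) (use r lim in auto)
  moreover have "d * b / a > 0" using a b d by simp
  ultimately have "eventually (\<lambda>x. (real x + 1) powr (-r) < d * b / a) sequentially"
    by (rule order_tendstoD)
  then obtain t0 where t0: "\<And>t. t \<ge> t0 \<Longrightarrow> (real t + 1) powr (-r) < d * b / a"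
    unfolding eventually_sequentially by blast
  have "a / (real t + 1) powr t1 \<le> d * (b / (real t + 1) powr t2)" if tt: "t \<ge> t0" for t
  proof -
    define x where "x = real t + 1"
    have x: "x > 0" unfolding x_def by simp
    have "x powr (-r) < d * b / a" using t0[OF tt] unfolding x_def .
    then have "1 / x powr r < d * b / a" by (simp add: powr_minus divide_inverse)
    then have h: "a < d * b * x powr r" using a x by (simp add: field_simps)
    have e: "x powr t1 = x powr r * x powr t2" unfolding r_def by (simp add: powr_add[symmetric])
    have "a / x powr t1 = (a / x powr r) / x powr t2" unfolding e by simp
    also have "\<dots> \<le> (d * b) / x powr t2"
      using h x by (intro divide_right_mono) (auto simp: field_simps)
    finally show ?thesis unfolding x_def by simp
  qed
  then show ?thesis by blast
qed



lemma smult_mv: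
  assumes A: "A \<in> carrier_mat nr nc" and v: "v \<in> carrier_vec nc"
  shows "(k \<cdot>\<^sub>m A) *\<^sub>v v = k \<cdot>\<^sub>v (A *\<^sub>v v)"
proof (rule eq_vecI)
  fix i assume "i < dim_vec (k \<cdot>\<^sub>v (A *\<^sub>v v))"
  then have i: "i < nr" using A by simp
  have kA: "k \<cdot>\<^sub>m A \<in> carrier_mat nr nc" using A by simp
  have e1: "((k \<cdot>\<^sub>m A) *\<^sub>v v) $ i = (\<Sum>j<nc. (k \<cdot>\<^sub>m A) $$ (i,j) * v $ j)" by (rule mv_entry[OF kA v i])
  have e2: "(A *\<^sub>v v) $ i = (\<Sum>j<nc. A $$ (i,j) * v $ j)" by (rule mv_entry[OF A v i])
  have e3: "(\<Sum>j<nc. (k \<cdot>\<^sub>m A) $$ (i,j) * v $ j) = k * (\<Sum>j<nc. A $$ (i,j) * v $ j)"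
    unfolding sum_distrib_left by (rule sum.cong[OF refl]) (use i A in \<open>simp add: mult.assoc\<close>)
  show "((k \<cdot>\<^sub>m A) *\<^sub>v v) $ i = (k \<cdot>\<^sub>v (A *\<^sub>v v)) $ i"
    using e1 e2 e3 i A by simp
qed (use A in simp)

lemma quad_form_nonneg:
  fixes q r s c p :: real
  assumes q: "q > 0" and rs: "r^2 \<le> q * s"
  shows "0 \<le> q * p^2 - 2 * r * c * p + s * c^2"
proof -
  have e: "q * (q * p^2 - 2 * r * c * p + s * c^2) = (q * p - r * c)^2 + (q * s - r^2) * c^2"
    by (simp add: power2_eq_square algebra_simps)
  have "0 \<le> (q * p - r * c)^2 + (q * s - r^2) * c^2" using rs by (intro add_nonneg_nonneg) auto
  then have "0 \<le> q * (q * p^2 - 2 * r * c * p + s * c^2)" using e by simp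
  then show ?thesis using q by (simp add: zero_le_mult_iff)
qed

lemma kron_entry_at: "a \<in> carrier_vec M \<Longrightarrow> k < N \<Longrightarrow> m < M \<Longrightarrow> kron_ones N a $ (k*M+m) = a $ m"
  using idx_lt[of k N m M] unfolding kron_ones_def by simp

lemma kron_self:
  assumes a: "a \<in> carrier_vec M"
  shows "kron_ones N a \<bullet> kron_ones N a = real N * (a \<bullet> a)"
proof -
  have ka: "kron_ones N a \<in> carrier_vec (N*M)" using a by simp
  have inner: "(\<Sum>k<N. kron_ones N a $ (k*M+m)) = real N * a $ m" if m: "m < M" for m
  proof -
    have "(\<Sum>k<N. kron_ones N a $ (k*M+m)) = (\<Sum>k<N. a $ m)"
      by (rule sum.cong[OF refl]) (use kron_entry_at[OF a _ m] in auto)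
    then show ?thesis by simp
  qed
  have "kron_ones N a \<bullet> kron_ones N a = (\<Sum>m<M. a $ m * (\<Sum>k<N. kron_ones N a $ (k*M+m)))"
    by (rule sp_kron[OF ka a])
  also have "\<dots> = (\<Sum>m<M. a $ m * (real N * a $ m))"
    by (rule sum.cong[OF refl]) (simp add: inner)
  also have "\<dots> = real N * (a \<bullet> a)" using a by (simp add: sp_self sum_distrib_left power2_eq_square mult_ac)
  finally show ?thesis .
qed

theorem proposition5p6:
  fixes N M :: nat and Mn :: "nat \<Rightarrow> nat"
    and H R :: "nat \<Rightarrow> real mat"
    and G :: "nat set set pmf"
    and a b \<tau>1 \<tau>2 \<epsilon>1 :: real
  defines "Sigma_c \<equiv> Matrix.mat M M (\<lambda>(i,j). (1 / real N) *
              (\<Sum>n<N. ((H n)\<^sup>T * minv (R n) * H n) $$ (i,j)))"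
  defines "K \<equiv> (\<lambda>n. minv Sigma_c * (H n)\<^sup>T * minv (R n))"
  defines "Kcal \<equiv> diag_block_mat (map K [0..<N])"
  defines "Hcal \<equiv> diag_block_mat (map H [0..<N])"
  defines "Lbar \<equiv> expected_laplacian N G"
  defines "\<alpha> \<equiv> (\<lambda>t::nat. a / (real t + 1) powr \<tau>1)"
  defines "\<beta> \<equiv> (\<lambda>t::nat. b / (real t + 1) powr \<tau>2)"
  assumes H_dim: "\<And>n. n < N \<Longrightarrow> H n \<in> carrier_mat (Mn n) M"
    and R_spd: "\<And>n. n < N \<Longrightarrow> sym_pos_def (Mn n) (R n)"
    and Sigma_inv: "invertible_mat Sigma_c"
    and G_graphs: "\<And>E. E \<in> set_pmf G \<Longrightarrow> simple_graph N E"
    and N_ge2: "2 \<le> N"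
    and lambda2_pos: "lambda2 Lbar > 0"
    and ab: "a > 0" "b > 0"
    and taus: "0 < \<tau>2" "\<tau>2 \<le> \<tau>1" "\<tau>1 \<le> 1"
    and eps1: "\<epsilon>1 > 0" "\<tau>1 > \<tau>2 + 1 / (2 + \<epsilon>1) + 1 / 2"
  shows "\<forall>\<epsilon>::real. 0 < \<epsilon> \<and> \<epsilon> < 1 \<longrightarrow>
    (\<exists>t\<epsilon>::nat. \<exists>c\<epsilon>::real. c\<epsilon> > 0 \<and>
      (\<forall>t \<ge> t\<epsilon>. \<forall>z \<in> carrier_vec (N * M).
        \<forall>Kt \<in> carrier_mat (N * M) (\<Sum>n<N. Mn n).
          mnorm2 (Kt * Hcal - Kcal * Hcal) \<le> \<epsilon> \<longrightarrow>
          scalar_prod z ((\<beta> t \<cdot>\<^sub>m kron Lbar (1\<^sub>m M) + \<alpha> t \<cdot>\<^sub>m (Kt * Hcal)) *\<^sub>v z)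
            \<ge> c\<epsilon> * \<beta> t * (vnorm (proj_perp N M z))\<^sup>2))"
proof -
  have Npos: "N > 0" using N_ge2 by simp
  have L: "Lbar \<in> carrier_mat N N" unfolding Lbar_def by (rule lbar_carrier)
  have Lsym: "transpose_mat Lbar = Lbar" unfolding Lbar_def by (rule lbar_sym)
  have Lpsd: "\<And>v. v \<in> carrier_vec N \<Longrightarrow> 0 \<le> v \<bullet> (Lbar *\<^sub>v v)" unfolding Lbar_def by (rule lbar_quad[OF G_graphs])
  have Lones: "\<And>c. Lbar *\<^sub>v Matrix.vec N (\<lambda>_. c) = 0\<^sub>v N" unfolding Lbar_def by (rule lbar_const[OF G_graphs])
  have Lker: "v = 0\<^sub>v N" if "v \<in> carrier_vec N" "Lbar *\<^sub>v v = 0\<^sub>v N" "(\<Sum>i<N. v $ i) = 0" for v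
    by (rule lambda2_kernel[OF L N_ge2 Lpsd Lones lambda2_pos that])
  obtain lam where lam: "lam > 0"
    and lamb: "\<And>x. x \<in> carrier_vec N \<Longrightarrow> (\<Sum>i<N. x $ i) = 0 \<Longrightarrow> lam * (x \<bullet> x) \<le> x \<bullet> (Lbar *\<^sub>v x)"
    using uniform_bound[OF L Lsym Lpsd Lker] by blast
  define Lk where "Lk = kron Lbar (1\<^sub>m M)"
  have Lk: "Lk \<in> carrier_mat (N*M) (N*M)" unfolding Lk_def by (rule kron_carrier[OF L])
  have Lk_perp: "lam * (p \<bullet> p) \<le> p \<bullet> (Lk *\<^sub>v p)" if p: "p \<in> consensus_perp N M" for p
  proof -
    have pc: "p \<in> carrier_vec (N*M)" using p unfolding consensus_perp_def by simp
    have "lam * (p \<bullet> p) = (\<Sum>m<M. lam * (comp N M p m \<bullet> comp N M p m))"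
      unfolding sp_self_split[OF pc] by (simp add: sum_distrib_left)
    also have "\<dots> \<le> (\<Sum>m<M. comp N M p m \<bullet> (Lbar *\<^sub>v comp N M p m))"
    proof (rule sum_mono)
      fix m assume m: "m \<in> {..<M}"
      then have m': "m < M" by simp
      show "lam * (comp N M p m \<bullet> comp N M p m) \<le> comp N M p m \<bullet> (Lbar *\<^sub>v comp N M p m)"
        by (rule lamb[OF comp_carrier comp_sum_zero[OF p m']])
    qed
    also have "\<dots> = p \<bullet> (Lk *\<^sub>v p)" unfolding Lk_def by (rule kron_quad[OF L pc pc, symmetric])
    finally show ?thesis .
  qed
  have Lk_red: "z \<bullet> (Lk *\<^sub>v z) = (z - kron_ones N (abar N M z)) \<bullet> (Lk *\<^sub>v (z - kron_ones N (abar N M z)))"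
    if z: "z \<in> carrier_vec (N*M)" for z
  proof -
    define a where "a = abar N M z"
    define zp where "zp = z - kron_ones N a"
    have a: "a \<in> carrier_vec M" unfolding a_def abar_def by simp
    have zp: "zp \<in> carrier_vec (N*M)" unfolding zp_def using z a by simp
    have cz: "comp N M z m = comp N M zp m + Matrix.vec N (\<lambda>_. a $ m)" if m: "m < M" for m
    proof (rule eq_vecI)
      fix k assume "k < dim_vec (comp N M zp m + Matrix.vec N (\<lambda>_. a $ m))"
      then have k: "k < N" by (simp add: comp_def)
      have lt: "k*M+m < N*M" by (rule idx_lt[OF k m])
      have dk: "dim_vec (kron_ones N a) = N * M" using a unfolding kron_ones_def by simp
      have e: "zp $ (k*M+m) = z $ (k*M+m) - a $ m"
        unfolding zp_def using index_minus_vec(1)[of "k*M+m" "kron_ones N a" z] lt dk kron_entry_at[OF a k m] by simp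
      show "comp N M z m $ k = (comp N M zp m + Matrix.vec N (\<lambda>_. a $ m)) $ k"
        using k e unfolding comp_def by simp
    qed (simp add: comp_def)
    have "z \<bullet> (Lk *\<^sub>v z) = (\<Sum>m<M. comp N M z m \<bullet> (Lbar *\<^sub>v comp N M z m))"
      unfolding Lk_def by (rule kron_quad[OF L z z])
    also have "\<dots> = (\<Sum>m<M. comp N M zp m \<bullet> (Lbar *\<^sub>v comp N M zp m))"
    proof (rule sum.cong[OF refl])
      fix m assume "m \<in> {..<M}"
      then have m: "m < M" by simp
      show "comp N M z m \<bullet> (Lbar *\<^sub>v comp N M z m) = comp N M zp m \<bullet> (Lbar *\<^sub>v comp N M zp m)"
        unfolding cz[OF m] by (rule sym_one_perp[OF L Lsym Lones comp_carrier])
    qed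
    also have "\<dots> = zp \<bullet> (Lk *\<^sub>v zp)" unfolding Lk_def by (rule kron_quad[OF L zp zp, symmetric])
    finally show ?thesis unfolding zp_def a_def .
  qed
  have Sc: "Sigma_c \<in> carrier_mat M M" unfolding Sigma_c_def by simp
  have Yp: "minv Sigma_c \<in> carrier_mat M M" "minv Sigma_c * Sigma_c = 1\<^sub>m M"
    using minv_props_inv[OF Sc Sigma_inv] by auto
  have Rinv: "minv (R n) \<in> carrier_mat (Mn n) (Mn n)" if n: "n < N" for n
  proof -
    have Rc: "R n \<in> carrier_mat (Mn n) (Mn n)"
      and pos: "\<And>v. v \<in> carrier_vec (Mn n) \<Longrightarrow> v \<noteq> 0\<^sub>v (Mn n) \<Longrightarrow> v \<bullet> (R n *\<^sub>v v) > 0"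
      using R_spd[OF n] unfolding sym_pos_def_def by auto
    have ker: "v = 0\<^sub>v (Mn n)" if v: "v \<in> carrier_vec (Mn n)" "R n *\<^sub>v v = 0\<^sub>v (Mn n)" for v
    proof (rule ccontr)
      assume "v \<noteq> 0\<^sub>v (Mn n)"
      then have "v \<bullet> (R n *\<^sub>v v) > 0" using pos v(1) by blast
      then show False using v by simp
    qed
    show ?thesis using minv_props_ker[OF Rc ker] by blast
  qed
  define G where "G = (\<lambda>n. (H n)\<^sup>T * minv (R n) * H n)"
  have Gc: "G n \<in> carrier_mat M M" if n: "n < N" for n
    using H_dim[OF n] Rinv[OF n] unfolding G_def by simp
  have Kc: "K n \<in> carrier_mat M (Mn n)" if n: "n < N" for n
    using Yp(1) H_dim[OF n] Rinv[OF n] unfolding K_def by simp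
  have KH: "K n *\<^sub>v (H n *\<^sub>v a) = minv Sigma_c *\<^sub>v (G n *\<^sub>v a)" if n: "n < N" and a: "a \<in> carrier_vec M" for n a
  proof -
    have Hn: "H n \<in> carrier_mat (Mn n) M" by (rule H_dim[OF n])
    have Ht: "(H n)\<^sup>T \<in> carrier_mat M (Mn n)" using Hn by simp
    have Ri: "minv (R n) \<in> carrier_mat (Mn n) (Mn n)" by (rule Rinv[OF n])
    have Ha: "H n *\<^sub>v a \<in> carrier_vec (Mn n)" using Hn a by simp
    have RHa: "minv (R n) *\<^sub>v (H n *\<^sub>v a) \<in> carrier_vec (Mn n)" using Ri Ha by simp
    have YHt: "minv Sigma_c * (H n)\<^sup>T \<in> carrier_mat M (Mn n)" using Yp(1) Ht by simp
    have HtR: "(H n)\<^sup>T * minv (R n) \<in> carrier_mat M (Mn n)" using Ht Ri by simp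
    have "K n *\<^sub>v (H n *\<^sub>v a) = (minv Sigma_c * (H n)\<^sup>T) *\<^sub>v (minv (R n) *\<^sub>v (H n *\<^sub>v a))"
      unfolding K_def by (rule assoc_mult_mat_vec[OF YHt Ri Ha])
    also have "\<dots> = minv Sigma_c *\<^sub>v ((H n)\<^sup>T *\<^sub>v (minv (R n) *\<^sub>v (H n *\<^sub>v a)))"
      by (rule assoc_mult_mat_vec[OF Yp(1) Ht RHa])
    also have "(H n)\<^sup>T *\<^sub>v (minv (R n) *\<^sub>v (H n *\<^sub>v a)) = ((H n)\<^sup>T * minv (R n)) *\<^sub>v (H n *\<^sub>v a)"
      by (rule assoc_mult_mat_vec[OF Ht Ri Ha, symmetric])
    also have "\<dots> = G n *\<^sub>v a" unfolding G_def by (rule assoc_mult_mat_vec[OF HtR Hn a, symmetric])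
    finally show ?thesis .
  qed
  have Ksum: "(\<Sum>n<N. a \<bullet> (K n *\<^sub>v (H n *\<^sub>v a))) = real N * (a \<bullet> a)" if a: "a \<in> carrier_vec M" for a
  proof -
    have "(\<Sum>n<N. a \<bullet> (K n *\<^sub>v (H n *\<^sub>v a))) = (\<Sum>n<N. a \<bullet> (minv Sigma_c *\<^sub>v (G n *\<^sub>v a)))"
      by (rule sum.cong[OF refl]) (simp add: KH a)
    also have "\<dots> = real N * (a \<bullet> a)"
      by (rule sigma_sum[OF Yp(1) Sc Yp(2) Gc _ Npos a]) (unfold Sigma_c_def G_def, auto)
    finally show ?thesis .
  qed
  have sl: "sum_list (map f [0..<N]) = (\<Sum>n<N. f n)" for f :: "nat \<Rightarrow> nat"
    by (simp add: interv_sum_list_conv_sum_set_nat atLeast0LessThan)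
  have Hr: "dim_row Hcal = (\<Sum>n<N. Mn n)" unfolding Hcal_def dim_diag_block_mat map_map sl
    by (rule sum.cong[OF refl]) (use H_dim in auto)
  have Hcol: "dim_col Hcal = N * M" unfolding Hcal_def dim_diag_block_mat map_map sl
  proof -
    have "(\<Sum>n<N. (dim_col \<circ> H) n) = (\<Sum>n<N. M)" by (rule sum.cong[OF refl]) (use H_dim in auto)
    then show "(\<Sum>n<N. (dim_col \<circ> H) n) = N * M" by simp
  qed
  have Kr: "dim_row Kcal = N * M" unfolding Kcal_def dim_diag_block_mat map_map sl
  proof -
    have "(\<Sum>n<N. (dim_row \<circ> K) n) = (\<Sum>n<N. M)" by (rule sum.cong[OF refl]) (use Kc in auto)
    then show "(\<Sum>n<N. (dim_row \<circ> K) n) = N * M" by simp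
  qed
  have Kcol: "dim_col Kcal = (\<Sum>n<N. Mn n)" unfolding Kcal_def dim_diag_block_mat map_map sl
    by (rule sum.cong[OF refl]) (use Kc in auto)
  have Hcal_c: "Hcal \<in> carrier_mat (\<Sum>n<N. Mn n) (N*M)" using Hr Hcol by auto
  have Kcal_c: "Kcal \<in> carrier_mat (N*M) (\<Sum>n<N. Mn n)" using Kr Kcol by auto
  define B where "B = Kcal * Hcal"
  have Bc: "B \<in> carrier_mat (N*M) (N*M)" using Kcal_c Hcal_c unfolding B_def by simp
  have Bq: "kron_ones N a \<bullet> (B *\<^sub>v kron_ones N a) = kron_ones N a \<bullet> kron_ones N a" if a: "a \<in> carrier_vec M" for a
  proof -
    have k: "kron_ones N a \<in> carrier_vec (N*M)" using a by simp
    have e1: "B *\<^sub>v kron_ones N a = Kcal *\<^sub>v (Hcal *\<^sub>v kron_ones N a)" unfolding B_def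
      by (rule assoc_mult_mat_vec[OF Kcal_c Hcal_c k])
    have dq: "kron_ones (length (map H [0..<N])) a \<bullet> (diag_block_mat (map K [0..<N]) *\<^sub>v (diag_block_mat (map H [0..<N]) *\<^sub>v kron_ones (length (map H [0..<N])) a))
         = (\<Sum>i<length (map H [0..<N]). a \<bullet> ((map K [0..<N])!i *\<^sub>v ((map H [0..<N])!i *\<^sub>v a)))"
    proof (rule diag_block_quad[OF _ _ a])
      show "length (map K [0..<N]) = length (map H [0..<N])" by simp
      fix i assume i: "i < length (map H [0..<N])"
      then have i': "i < N" by simp
      have hi: "dim_row (H i) = Mn i" using H_dim[OF i'] by simp
      show "map H [0..<N] ! i \<in> carrier_mat (dim_row (map H [0..<N] ! i)) M \<and> map K [0..<N] ! i \<in> carrier_mat M (dim_row (map H [0..<N] ! i))"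
        using H_dim[OF i'] Kc[OF i'] i' unfolding hi by simp
    qed
    have e2: "(\<Sum>i<length (map H [0..<N]). a \<bullet> ((map K [0..<N])!i *\<^sub>v ((map H [0..<N])!i *\<^sub>v a)))
        = (\<Sum>i<N. a \<bullet> (K i *\<^sub>v (H i *\<^sub>v a)))" by (rule sum.cong) auto
    have "kron_ones N a \<bullet> (B *\<^sub>v kron_ones N a) = (\<Sum>i<N. a \<bullet> (K i *\<^sub>v (H i *\<^sub>v a)))"
      using dq e2 unfolding e1 Kcal_def Hcal_def by simp
    then show ?thesis using Ksum[OF a] kron_self[OF a] by simp
  qed
  have tlt: "\<tau>2 < \<tau>1"
  proof -
    have "1 / (2 + \<epsilon>1) > 0" using eps1(1) by simp
    then show ?thesis using eps1(2) by linarith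
  qed
  have apos: "\<alpha> t > 0" for t unfolding \<alpha>_def using ab by simp
  have bpos: "\<beta> t > 0" for t unfolding \<beta>_def using ab by simp
  show ?thesis
  proof (intro allI impI)
    fix \<epsilon> :: real assume eps: "0 < \<epsilon> \<and> \<epsilon> < 1"
    define F where "F = absum B"
    have F0: "F \<ge> 0" unfolding F_def by (rule absum_nonneg)
    define \<delta> where "\<delta> = min (lam / (4*(F+1))) (lam*(1-\<epsilon>) / (4*(F^2+1)))"
    have d1: "\<delta> \<le> lam / (4*(F+1))" and d2: "\<delta> \<le> lam*(1-\<epsilon>) / (4*(F^2+1))" unfolding \<delta>_def by auto
    have dpos: "\<delta> > 0"
    proof -
      have p1: "lam / (4*(F+1)) > 0" using lam F0 by simp
      have "0 < F^2 + 1" using zero_le_power2[of F] by linarith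
      then have p2: "lam*(1-\<epsilon>) / (4*(F^2+1)) > 0" using lam eps by simp
      show ?thesis unfolding \<delta>_def using p1 p2 by simp
    qed
    obtain t0 where t0: "\<And>t. t \<ge> t0 \<Longrightarrow> \<alpha> t \<le> \<delta> * \<beta> t"
      using ratio_eventually[OF ab(1) ab(2) tlt dpos] unfolding \<alpha>_def \<beta>_def by blast
    have main: "scalar_prod z ((\<beta> t \<cdot>\<^sub>m kron Lbar (1\<^sub>m M) + \<alpha> t \<cdot>\<^sub>m (Kt * Hcal)) *\<^sub>v z)
            \<ge> lam / 2 * \<beta> t * (vnorm (proj_perp N M z))\<^sup>2"
      if t: "t \<ge> t0" and z: "z \<in> carrier_vec (N * M)" and Kt: "Kt \<in> carrier_mat (N * M) (\<Sum>n<N. Mn n)"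
        and mn: "mnorm2 (Kt * Hcal - Kcal * Hcal) \<le> \<epsilon>" for t z Kt
    proof -
      define A where "A = Kt * Hcal"
      have A: "A \<in> carrier_mat (N*M) (N*M)" unfolding A_def using Kt Hcal_c by simp
      define D where "D = A - B"
      have D: "D \<in> carrier_mat (N*M) (N*M)" unfolding D_def by (rule minus_carrier_mat[OF Bc])
      have mnD: "mnorm2 D \<le> \<epsilon>" using mn unfolding D_def A_def B_def .
      define a where "a = abar N M z"
      define zc where "zc = kron_ones N a"
      define zp where "zp = z - zc"
      have a: "a \<in> carrier_vec M" unfolding a_def abar_def by simp
      have zc: "zc \<in> carrier_vec (N*M)" unfolding zc_def using a by simp
      have zp: "zp \<in> carrier_vec (N*M)" unfolding zp_def using z zc by simp
      have pp: "proj_perp N M z = zp" unfolding zp_def zc_def a_def by (rule proj_perp_eq(1)[OF z Npos])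
      have zpperp: "zp \<in> consensus_perp N M" unfolding zp_def zc_def a_def by (rule proj_perp_eq(2)[OF z Npos])
      have zdec: "z = zc + zp"
      proof (rule eq_vecI)
        fix i assume "i < dim_vec (zc + zp)"
        then have i: "i < N*M" using zc zp by simp
        show "z $ i = (zc + zp) $ i" unfolding zp_def using i z zc by simp
      qed (use z zc zp in simp)
      have zcC: "zc \<in> consensus N M" unfolding zc_def consensus_def using a by blast
      have o1: "zp \<bullet> zc = 0" using zpperp zcC unfolding consensus_perp_def by blast
      have o2: "zc \<bullet> zp = 0" using o1 comm_scalar_prod[OF zc zp] by simp
      define c where "c = vnorm zc"
      define p where "p = vnorm zp"
      have c0: "c \<ge> 0" "p \<ge> 0" unfolding c_def p_def by (simp_all add: vnorm_nonneg)
      have csq: "zc \<bullet> zc = c^2" unfolding c_def by (simp add: vnorm_sq)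
      have psq: "zp \<bullet> zp = p^2" unfolding p_def by (simp add: vnorm_sq)
      have zz: "z \<bullet> z = c^2 + p^2"
      proof -
        have "z \<bullet> z = (zc + zp) \<bullet> (zc + zp)" using zdec by simp
        also have "\<dots> = zc \<bullet> (zc + zp) + zp \<bullet> (zc + zp)"
          by (rule add_scalar_prod_distrib[OF zc zp]) (use zc zp in simp)
        also have "\<dots> = (zc \<bullet> zc + zc \<bullet> zp) + (zp \<bullet> zc + zp \<bullet> zp)"
          using scalar_prod_add_distrib[OF zc zc zp] scalar_prod_add_distrib[OF zp zc zp] by simp
        finally show ?thesis using o1 o2 csq psq by simp
      qed
      have Lq: "z \<bullet> (Lk *\<^sub>v z) \<ge> lam * p^2"
      proof -
        have "z \<bullet> (Lk *\<^sub>v z) = zp \<bullet> (Lk *\<^sub>v zp)" using Lk_red[OF z] unfolding zp_def zc_def a_def .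
        then show ?thesis using Lk_perp[OF zpperp] psq by simp
      qed
      have bb: "\<bar>x \<bullet> (B *\<^sub>v y)\<bar> \<le> F * vnorm x * vnorm y"
        if "x \<in> carrier_vec (N*M)" "y \<in> carrier_vec (N*M)" for x y
        using bil_bound[OF Bc that] unfolding F_def .
      have Bzc_c: "B *\<^sub>v zc \<in> carrier_vec (N*M)" using Bc zc by simp
      have Bzp_c: "B *\<^sub>v zp \<in> carrier_vec (N*M)" using Bc zp by simp
      have Bzz: "z \<bullet> (B *\<^sub>v z) = (zc \<bullet> (B *\<^sub>v zc) + zc \<bullet> (B *\<^sub>v zp)) + (zp \<bullet> (B *\<^sub>v zc) + zp \<bullet> (B *\<^sub>v zp))"
      proof -
        have Bz: "B *\<^sub>v (zc + zp) = B *\<^sub>v zc + B *\<^sub>v zp" by (rule mult_add_distrib_mat_vec[OF Bc zc zp])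
        have "z \<bullet> (B *\<^sub>v z) = (zc + zp) \<bullet> (B *\<^sub>v zc + B *\<^sub>v zp)" using zdec Bz by simp
        also have "\<dots> = zc \<bullet> (B *\<^sub>v zc + B *\<^sub>v zp) + zp \<bullet> (B *\<^sub>v zc + B *\<^sub>v zp)"
          by (rule add_scalar_prod_distrib[OF zc zp]) (use Bzc_c Bzp_c in simp)
        also have "\<dots> = (zc \<bullet> (B *\<^sub>v zc) + zc \<bullet> (B *\<^sub>v zp)) + (zp \<bullet> (B *\<^sub>v zc) + zp \<bullet> (B *\<^sub>v zp))"
          using scalar_prod_add_distrib[OF zc Bzc_c Bzp_c] scalar_prod_add_distrib[OF zp Bzc_c Bzp_c] by simp
        finally show ?thesis .
      qed
      have Bzc: "zc \<bullet> (B *\<^sub>v zc) = c^2" using Bq[OF a] csq unfolding zc_def by simp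
      have Bb1: "- (F * c * p) \<le> zc \<bullet> (B *\<^sub>v zp)" using abs_le_D2[OF bb[OF zc zp]] unfolding c_def p_def by simp
      have Bb2: "- (F * c * p) \<le> zp \<bullet> (B *\<^sub>v zc)" using abs_le_D2[OF bb[OF zp zc]] unfolding c_def p_def by (simp add: mult_ac)
      have Bb3: "- (F * p^2) \<le> zp \<bullet> (B *\<^sub>v zp)" using abs_le_D2[OF bb[OF zp zp]] unfolding p_def by (simp add: power2_eq_square mult_ac)
      have Dz: "- (\<epsilon> * (c^2 + p^2)) \<le> z \<bullet> (D *\<^sub>v z)"
      proof -
        have h1: "z \<bullet> (D *\<^sub>v z) \<ge> - (mnorm2 D * (vnorm z)^2)" by (rule quad_mnorm2[OF D z])
        have h2: "mnorm2 D * (vnorm z)^2 \<le> \<epsilon> * (vnorm z)^2" using mnD by (rule mult_right_mono) simp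
        have h3: "(vnorm z)^2 = c^2 + p^2" using vnorm_sq[of z] zz by simp
        show ?thesis using h1 h2 h3 by simp
      qed
      have Az: "z \<bullet> (A *\<^sub>v z) = z \<bullet> (B *\<^sub>v z) + z \<bullet> (D *\<^sub>v z)"
      proof -
        have "D *\<^sub>v z = A *\<^sub>v z - B *\<^sub>v z" unfolding D_def by (rule minus_mult_distrib_mat_vec[OF A Bc z])
        moreover have "z \<bullet> (A *\<^sub>v z - B *\<^sub>v z) = z \<bullet> (A *\<^sub>v z) - z \<bullet> (B *\<^sub>v z)"
          by (rule scalar_prod_minus_distrib[OF z]) (use A Bc z in simp_all)
        ultimately show ?thesis by simp
      qed
      have ep: "\<epsilon> * p^2 \<le> p^2" using eps by (intro mult_left_le_one_le) auto
      have Aq: "(1-\<epsilon>)*c^2 - 2*F*c*p - (F+1)*p^2 \<le> z \<bullet> (A *\<^sub>v z)"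
      proof -
        have "(1-\<epsilon>)*c^2 - 2*F*c*p - (F+1)*p^2 \<le> c^2 - F*c*p - F*c*p - F*p^2 - (\<epsilon>*c^2 + \<epsilon>*p^2)"
          using ep by (simp add: algebra_simps)
        also have "\<dots> \<le> z \<bullet> (A *\<^sub>v z)" using Az Bzz Bzc Bb1 Bb2 Bb3 Dz by (simp add: algebra_simps)
        finally show ?thesis .
      qed
      have expand: "z \<bullet> ((\<beta> t \<cdot>\<^sub>m Lk + \<alpha> t \<cdot>\<^sub>m A) *\<^sub>v z) = \<beta> t * (z \<bullet> (Lk *\<^sub>v z)) + \<alpha> t * (z \<bullet> (A *\<^sub>v z))"
      proof -
        have c1: "\<beta> t \<cdot>\<^sub>m Lk \<in> carrier_mat (N*M) (N*M)" using Lk by simp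
        have c2: "\<alpha> t \<cdot>\<^sub>m A \<in> carrier_mat (N*M) (N*M)" using A by simp
        have "(\<beta> t \<cdot>\<^sub>m Lk + \<alpha> t \<cdot>\<^sub>m A) *\<^sub>v z = (\<beta> t \<cdot>\<^sub>m Lk) *\<^sub>v z + (\<alpha> t \<cdot>\<^sub>m A) *\<^sub>v z"
          by (rule add_mult_distrib_mat_vec[OF c1 c2 z])
        also have "\<dots> = \<beta> t \<cdot>\<^sub>v (Lk *\<^sub>v z) + \<alpha> t \<cdot>\<^sub>v (A *\<^sub>v z)"
          using smult_mv[OF Lk z] smult_mv[OF A z] by simp
        finally have e: "(\<beta> t \<cdot>\<^sub>m Lk + \<alpha> t \<cdot>\<^sub>m A) *\<^sub>v z = \<beta> t \<cdot>\<^sub>v (Lk *\<^sub>v z) + \<alpha> t \<cdot>\<^sub>v (A *\<^sub>v z)" .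
        have u1: "\<beta> t \<cdot>\<^sub>v (Lk *\<^sub>v z) \<in> carrier_vec (N*M)" using Lk z by simp
        have u2: "\<alpha> t \<cdot>\<^sub>v (A *\<^sub>v z) \<in> carrier_vec (N*M)" using A z by simp
        have "z \<bullet> (\<beta> t \<cdot>\<^sub>v (Lk *\<^sub>v z) + \<alpha> t \<cdot>\<^sub>v (A *\<^sub>v z)) = z \<bullet> (\<beta> t \<cdot>\<^sub>v (Lk *\<^sub>v z)) + z \<bullet> (\<alpha> t \<cdot>\<^sub>v (A *\<^sub>v z))"
          by (rule scalar_prod_add_distrib[OF z u1 u2])
        also have "\<dots> = \<beta> t * (z \<bullet> (Lk *\<^sub>v z)) + \<alpha> t * (z \<bullet> (A *\<^sub>v z))"
          using Lk A z by simp
        finally show ?thesis unfolding e .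
      qed
      have ineq: "lam / 2 * \<beta> t * p^2 \<le> \<beta> t * (z \<bullet> (Lk *\<^sub>v z)) + \<alpha> t * (z \<bullet> (A *\<^sub>v z))"
      proof -
        define aa where "aa = \<alpha> t"
        define bt where "bt = \<beta> t"
        have al: "aa \<le> \<delta> * bt" using t0[OF t] unfolding aa_def bt_def .
        have aap: "aa > 0" unfolding aa_def by (rule apos)
        have btp: "bt > 0" unfolding bt_def by (rule bpos)
        have h1: "aa * (F+1) \<le> lam * bt / 4"
        proof -
          have "aa * (F+1) \<le> (\<delta> * bt) * (F+1)" using al F0 by (intro mult_right_mono) auto
          also have "\<dots> \<le> ((lam / (4*(F+1))) * bt) * (F+1)"
            using d1 btp F0 by (intro mult_right_mono) auto
          also have "\<dots> = lam * bt / 4" using F0 by (simp add: field_simps)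
          finally show ?thesis .
        qed
        have h2: "aa * F^2 \<le> lam * (1-\<epsilon>) * bt / 4"
        proof -
          have "aa * F^2 \<le> aa * (F^2+1)" using aap by simp
          also have "\<dots> \<le> (\<delta> * bt) * (F^2+1)" using al by (intro mult_right_mono) auto
          also have "\<dots> \<le> ((lam*(1-\<epsilon>) / (4*(F^2+1))) * bt) * (F^2+1)"
            using d2 btp by (intro mult_right_mono) auto
          also have "\<dots> = lam * (1-\<epsilon>) * bt / 4"
          proof -
            have "0 < F^2 + 1" using zero_le_power2[of F] by linarith
            then show ?thesis by (simp add: field_simps)
          qed
          finally show ?thesis .
        qed
        define q where "q = bt * lam / 2 - aa * (F+1)"
        define r where "r = aa * F"
        define s where "s = aa * (1-\<epsilon>)"
        have qge: "q \<ge> lam * bt / 4" unfolding q_def using h1 by (simp add: mult.commute)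
        have lb: "lam * bt / 4 > 0" using lam btp by simp
        have qpos: "q > 0" using qge lb by linarith
        have s0: "s \<ge> 0" unfolding s_def using aap eps by simp
        have rs: "r^2 \<le> q * s"
        proof -
          have "r^2 = aa * (aa * F^2)" unfolding r_def by (simp add: power2_eq_square mult_ac)
          also have "\<dots> \<le> aa * (lam * (1-\<epsilon>) * bt / 4)" using h2 aap by (intro mult_left_mono) auto
          also have "\<dots> = (lam * bt / 4) * s" unfolding s_def by (simp add: mult_ac)
          also have "\<dots> \<le> q * s" using qge s0 by (rule mult_right_mono)
          finally show ?thesis .
        qed
        have qf: "0 \<le> q * p^2 - 2 * r * c * p + s * c^2" by (rule quad_form_nonneg[OF qpos rs])
        have m1: "bt * (lam * p^2) \<le> bt * (z \<bullet> (Lk *\<^sub>v z))" using Lq btp by (intro mult_left_mono) auto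
        have m2: "aa * ((1-\<epsilon>)*c^2 - 2*F*c*p - (F+1)*p^2) \<le> aa * (z \<bullet> (A *\<^sub>v z))"
          using Aq aap by (intro mult_left_mono) auto
        have idt: "bt * (lam * p^2) + aa * ((1-\<epsilon>)*c^2 - 2*F*c*p - (F+1)*p^2) - lam / 2 * bt * p^2
            = (q * p^2 - 2 * r * c * p + s * c^2)"
          unfolding q_def r_def s_def by (simp add: algebra_simps)
        have m3: "0 \<le> aa * (1-\<epsilon>) * p^2" using aap eps by simp
        show ?thesis using m1 m2 m3 qf idt unfolding aa_def bt_def by linarith
      qed
      show ?thesis using ineq expand pp unfolding Lk_def A_def p_def by simp
    qed
    show "\<exists>t\<epsilon>::nat. \<exists>c\<epsilon>::real. c\<epsilon> > 0 \<and>
      (\<forall>t \<ge> t\<epsilon>. \<forall>z \<in> carrier_vec (N * M).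
        \<forall>Kt \<in> carrier_mat (N * M) (\<Sum>n<N. Mn n).
          mnorm2 (Kt * Hcal - Kcal * Hcal) \<le> \<epsilon> \<longrightarrow>
          scalar_prod z ((\<beta> t \<cdot>\<^sub>m kron Lbar (1\<^sub>m M) + \<alpha> t \<cdot>\<^sub>m (Kt * Hcal)) *\<^sub>v z)
            \<ge> c\<epsilon> * \<beta> t * (vnorm (proj_perp N M z))\<^sup>2)"
      using main lam by (intro exI[of _ t0] exI[of _ "lam/2"]) auto
  qed
qed


end
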